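(* Let $T=(T_1,\dots,T_N)$ be an $N$-tuple of $1$-currents in $\mathbb{R}^n$ with locally finite joint mass such that \[ \sum_{k=1}^N\int_\Omega\vec T_k\cdot D_{\vec T_k}\psi\,d\|T\|=0\quad\text{for all }\psi\in C^\infty_0(\Omega;\mathbb{R}^n). \] Let $w\in W^{1,\infty}_0(\Omega;\mathbb{R}^N)$. If the local $L^2$-representative of $Dw$ with respect to $\|T\|\llcorner\Omega$ exists and equals $0$, then $w=0$ on $\operatorname{supp}T$ (here $w$ is the continuous representative, extended by $0$ to $\partial\Omega$).
   Context: $\Omega\subseteq\mathbb{R}^n$ is a bounded domain with smooth boundary. $\mathcal{D}^1(\mathbb{R}^n)$ is the space of smooth compactly supported $1$-forms; a $1$-current is a continuous linear functional on it. An $N$-tuple $T$ of $1$-currents has locally finite joint mass if for every compact $K$, $\sup\{\sum_kT_k(\omega_k):\operatorname{supp}\omega_k\subseteq K,\ \sup\sum_k|\omega_k|^2\le1\}<\infty$; then $T_k(\omega)=\int\omega(\vec T_k)\,d\|T\|$ for a unique Radon measure $\|T\|$ and $\|T\|$-measurable vector fields $\vec T_k\colon\mathbb{R}^n\to\mathbb{R}^n$ with $\sum_k|\vec T_k|^2=1$ $\|T\|$-a.e. $D_v\psi=(D\psi)v$ denotes the directional derivative. $\operatorname{supp}T$ is the complement of the largest open set on which all $T_k$ vanish. Local $L^2$-representative: for a Radon measure $\mu$ on $\Omega$ and $f\in L^1_{\mathrm{loc}}(\Omega;\mathbb{R}^{N\times n})$, $g\in L^2_{\mathrm{loc}}(\mu)$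 is the local $L^2$-representative of $f$ w.r.t. $\mu$ if for every compact $K\subset\Omega$ and every $\eta\in C^\infty_0(\mathbb{R}^n)$ with $\int\eta=1$, with $\eta_\epsilon(x)=\epsilon^{-n}\eta(x/\epsilon)$, $\lim_{\epsilon\searrow0}\int_K|g-\eta_\epsilon*f|^2d\mu=0$. *)

theory Defs
  imports "HOL-Analysis.Analysis"
begin

definition pderiv_at :: "'n::finite \<Rightarrow> (real^'n \<Rightarrow> 'b::real_normed_vector) \<Rightarrow> real^'n \<Rightarrow> 'b" where
  "pderiv_at i f x = frechet_derivative f (at x) (axis i 1)"

definition iter_pderiv :: "'n::finite list \<Rightarrow> (real^'n \<Rightarrow> 'b::real_normed_vector) \<Rightarrow> real^'n \<Rightarrow> 'b" where
  "iter_pderiv is f = foldr pderiv_at is f"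

definition smooth_fun :: "(real^'n::finite \<Rightarrow> 'b::real_normed_vector) \<Rightarrow> bool" where
  "smooth_fun f \<longleftrightarrow> (\<forall>is x. iter_pderiv is f differentiable (at x))"

definition tsupp :: "('a::topological_space \<Rightarrow> 'b::zero) \<Rightarrow> 'a set" where
  "tsupp f = closure {x. f x \<noteq> 0}"

text \<open>Smooth compactly supported functions with support contained in U
  (for U = UNIV: the space C_0^infinity(R^n); for 1-forms: D^1(R^n), a 1-form
  being identified with a vector field via the Euclidean inner product).\<close>
definition test_fun_on :: "(real^'n::finite) set \<Rightarrow> (real^'n \<Rightarrow> 'b::real_normed_vector) \<Rightarrow> bool" where
  "test_fun_on U f \<longleftrightarrow> smooth_fun f \<and> compact (tsupp f) \<and> tsupp f \<subseteq> U"

definition smooth_boundary :: "(real^'n::finite) set \<Rightarrow> bool" where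
  "smooth_boundary \<Omega> \<longleftrightarrow>
     (\<forall>p\<in>frontier \<Omega>. \<exists>r>0. \<exists>\<rho>::real^'n \<Rightarrow> real. smooth_fun \<rho> \<and>
        \<Omega> \<inter> ball p r = {x\<in>ball p r. \<rho> x < 0} \<and>
        (\<forall>x\<in>ball p r. \<exists>v. frechet_derivative \<rho> (at x) v \<noteq> 0))"

definition bounded_smooth_domain :: "(real^'n::finite) set \<Rightarrow> bool" where
  "bounded_smooth_domain \<Omega> \<longleftrightarrow> open \<Omega> \<and> connected \<Omega> \<and> \<Omega> \<noteq> {} \<and> bounded \<Omega> \<and> smooth_boundary \<Omega>"

definition loc_finite_joint_mass :: "('k::finite \<Rightarrow> (real^'n::finite \<Rightarrow> real^'n) \<Rightarrow> real) \<Rightarrow> bool" where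
  "loc_finite_joint_mass T \<longleftrightarrow>
     (\<forall>K. compact K \<longrightarrow> bdd_above
        {\<Sum>k\<in>UNIV. T k (\<omega> k) | \<omega>. (\<forall>k. test_fun_on UNIV (\<omega> k) \<and> tsupp (\<omega> k) \<subseteq> K) \<and>
                                  (\<forall>x. (\<Sum>k\<in>UNIV. (norm (\<omega> k x))\<^sup>2) \<le> 1)})"

definition current_supp :: "('k \<Rightarrow> (real^'n::finite \<Rightarrow> real^'n) \<Rightarrow> real) \<Rightarrow> (real^'n) set" where
  "current_supp T = - \<Union>{U. open U \<and> (\<forall>k \<omega>. test_fun_on U \<omega> \<longrightarrow> T k \<omega> = 0)}"

text \<open>mu, V is the (unique) polar representation: mu = ||T||, V k = vec T_k.
  On R^n a Borel measure finite on compact sets is Radon.\<close>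
definition joint_mass_repr ::
  "('k::finite \<Rightarrow> (real^'n::finite \<Rightarrow> real^'n) \<Rightarrow> real) \<Rightarrow> (real^'n) measure \<Rightarrow> ('k \<Rightarrow> real^'n \<Rightarrow> real^'n) \<Rightarrow> bool" where
  "joint_mass_repr T \<mu> V \<longleftrightarrow>
     sets \<mu> = sets borel \<and> (\<forall>K. compact K \<longrightarrow> emeasure \<mu> K < \<infinity>) \<and>
     (\<forall>k. V k \<in> borel_measurable \<mu>) \<and>
     (AE x in \<mu>. (\<Sum>k\<in>UNIV. (norm (V k x))\<^sup>2) = 1) \<and>
     (\<forall>k \<omega>. test_fun_on UNIV \<omega> \<longrightarrow> T k \<omega> = (\<integral>x. \<omega> x \<bullet> V k x \<partial>\<mu>))"

definition mollifier_scale :: "(real^'n::finite \<Rightarrow> real) \<Rightarrow> real \<Rightarrow> real^'n \<Rightarrow> real" where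
  "mollifier_scale \<eta> \<epsilon> x = \<eta> (x /\<^sub>R \<epsilon>) / \<epsilon> ^ CARD('n)"

definition conv_on :: "(real^'n::finite) set \<Rightarrow> (real^'n \<Rightarrow> real) \<Rightarrow> (real^'n \<Rightarrow> 'b::{banach,second_countable_topology}) \<Rightarrow> real^'n \<Rightarrow> 'b" where
  "conv_on \<Omega> \<eta> f x = (\<integral>y\<in>\<Omega>. \<eta> (x - y) *\<^sub>R f y \<partial>lebesgue)"

definition is_local_L2_rep ::
  "(real^'n::finite) measure \<Rightarrow> (real^'n) set \<Rightarrow> (real^'n \<Rightarrow> 'b::{banach,second_countable_topology}) \<Rightarrow> (real^'n \<Rightarrow> 'b) \<Rightarrow> bool" where
  "is_local_L2_rep \<mu> \<Omega> f g \<longleftrightarrow>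
     (\<forall>K. compact K \<and> K \<subseteq> \<Omega> \<longrightarrow> set_integrable \<mu> K (\<lambda>x. (norm (g x))\<^sup>2)) \<and>
     (\<forall>K \<eta>. compact K \<and> K \<subseteq> \<Omega> \<and> test_fun_on UNIV \<eta> \<and> integral\<^sup>L lebesgue \<eta> = 1 \<longrightarrow>
        ((\<lambda>\<epsilon>. \<integral>x\<in>K. (norm (g x - conv_on \<Omega> (mollifier_scale \<eta> \<epsilon>) f x))\<^sup>2 \<partial>\<mu>)
           \<longlongrightarrow> 0) (at_right 0))"

text \<open>Weak derivative on Omega: Dw x $ k $ i = d_i w_k, a locally integrable N x n matrix field.\<close>
definition weak_deriv_on :: "(real^'n::finite) set \<Rightarrow> (real^'n \<Rightarrow> real^'k::finite) \<Rightarrow> (real^'n \<Rightarrow> real^'n^'k) \<Rightarrow> bool" where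
  "weak_deriv_on \<Omega> w Dw \<longleftrightarrow>
     (\<forall>K. compact K \<and> K \<subseteq> \<Omega> \<longrightarrow> set_integrable lebesgue K Dw) \<and>
     (\<forall>\<phi> k i. test_fun_on \<Omega> (\<phi> :: real^'n \<Rightarrow> real) \<longrightarrow>
        (\<integral>x\<in>\<Omega>. w x $ k * pderiv_at i \<phi> x \<partial>lebesgue) = - (\<integral>x\<in>\<Omega>. Dw x $ k $ i * \<phi> x \<partial>lebesgue))"

end

theory Submission
  imports Defs "HOL-Computational_Algebra.Polynomial"
begin


lemma iter_pderiv_Cons: "iter_pderiv (i#is) f = pderiv_at i (iter_pderiv is f)"
  by (simp add: iter_pderiv_def)
lemma iter_pderiv_Nil: "iter_pderiv [] f = f"
  by (simp add: iter_pderiv_def)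
lemma iter_pderiv_snoc: "iter_pderiv (is@[i]) f = iter_pderiv is (pderiv_at i f)"
  by (simp add: iter_pderiv_def)

lemma smooth_funI_closed:
  assumes P: "\<And>g. g \<in> P \<Longrightarrow> (\<forall>x. g differentiable (at x)) \<and> (\<forall>i. pderiv_at i g \<in> P)"
  and "f \<in> P" shows "smooth_fun f"
proof -
  have "iter_pderiv is f \<in> P" for "is"
    by (induction "is") (auto simp: iter_pderiv_Cons iter_pderiv_Nil assms dest: P)
  thus ?thesis using P by (auto simp: smooth_fun_def)
qed

lemma smooth_fun_diff: "smooth_fun f \<Longrightarrow> f differentiable (at x)"
  unfolding smooth_fun_def by (metis iter_pderiv_Nil)

lemma smooth_fun_pderiv: "smooth_fun f \<Longrightarrow> smooth_fun (pderiv_at i f)"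
  unfolding smooth_fun_def by (metis iter_pderiv_snoc)

lemma pderiv_at_eq: "(f has_derivative f') (at x) \<Longrightarrow> pderiv_at i f x = f' (axis i 1)"
  by (metis frechet_derivative_at pderiv_at_def)

lemma has_derivative_fd: "f differentiable (at x) \<Longrightarrow> (f has_derivative frechet_derivative f (at x)) (at x)"
  by (simp add: frechet_derivative_works)


definition smooth1 :: "(real \<Rightarrow> real) \<Rightarrow> bool" where
  "smooth1 h \<longleftrightarrow> (\<forall>m t. (deriv ^^ m) h field_differentiable (at t))"

lemma smooth1_deriv: "smooth1 h \<Longrightarrow> smooth1 (deriv h)"
  unfolding smooth1_def by (metis funpow_Suc_right o_apply)

lemma smooth1_DERIV: "smooth1 h \<Longrightarrow> (h has_real_derivative deriv h t) (at t)"
  unfolding smooth1_def by (metis DERIV_deriv_iff_field_differentiable funpow_0)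

lemma smooth_const: "smooth_fun (\<lambda>x::real^'n::finite. c::real)"
proof (rule smooth_funI_closed[where P="range (\<lambda>c. \<lambda>x. c)"])
  fix g :: "real^'n \<Rightarrow> real" assume "g \<in> range (\<lambda>c. \<lambda>x. c)"
  then obtain d where g: "g = (\<lambda>x. d)" by auto
  have "pderiv_at i g = (\<lambda>x. 0)" for i
    by (rule ext, unfold g, rule pderiv_at_eq[where f'="\<lambda>_. 0", simplified]) (rule has_derivative_const)
  then show "(\<forall>x. g differentiable (at x)) \<and> (\<forall>i. pderiv_at i g \<in> range (\<lambda>c. \<lambda>x. c))"
    using g by auto
qed auto

inductive_set gen :: "(real^'n::finite \<Rightarrow> real) set" where
  base: "smooth_fun f \<Longrightarrow> f \<in> gen"
| add: "f \<in> gen \<Longrightarrow> g \<in> gen \<Longrightarrow> (\<lambda>x. f x + g x) \<in> gen"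
| mult: "f \<in> gen \<Longrightarrow> g \<in> gen \<Longrightarrow> (\<lambda>x. f x * g x) \<in> gen"
| comp: "smooth1 h \<Longrightarrow> f \<in> gen \<Longrightarrow> (\<lambda>x. h (f x)) \<in> gen"
| aff: "smooth_fun f \<Longrightarrow> (\<lambda>x. f (c *\<^sub>R x + b)) \<in> gen"

lemma gen_closed:
  assumes "f \<in> gen"
  shows "(\<forall>x. f differentiable (at x)) \<and> (\<forall>i. pderiv_at i f \<in> gen)"
  using assms
proof induction
  case (base f)
  then show ?case by (auto intro: smooth_fun_diff smooth_fun_pderiv gen.base)
next
  case (add f g)
  have d: "((\<lambda>x. f x + g x) has_derivative (\<lambda>v. frechet_derivative f (at x) v + frechet_derivative g (at x) v)) (at x)" for x
    using add by (intro has_derivative_add has_derivative_fd) auto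
  have "pderiv_at i (\<lambda>x. f x + g x) = (\<lambda>x. pderiv_at i f x + pderiv_at i g x)" for i
    using pderiv_at_eq[OF d] by (auto simp: pderiv_at_def)
  moreover have "(\<lambda>x. pderiv_at i f x + pderiv_at i g x) \<in> gen" for i
    using add by (intro gen.add) auto
  ultimately show ?case using differentiableI[OF d] by auto
next
  case (mult f g)
  have d: "((\<lambda>x. f x * g x) has_derivative (\<lambda>v. f x * frechet_derivative g (at x) v + frechet_derivative f (at x) v * g x)) (at x)" for x
    using mult by (intro has_derivative_mult has_derivative_fd) auto
  have "pderiv_at i (\<lambda>x. f x * g x) = (\<lambda>x. f x * pderiv_at i g x + pderiv_at i f x * g x)" for i
    using pderiv_at_eq[OF d] by (auto simp: pderiv_at_def)
  moreover have "(\<lambda>x. f x * pderiv_at i g x + pderiv_at i f x * g x) \<in> gen" for i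
    using mult by (intro gen.add gen.mult) auto
  ultimately show ?case using differentiableI[OF d] by auto
next
  case (comp h f)
  have d: "((\<lambda>x. h (f x)) has_derivative (\<lambda>v. deriv h (f x) * frechet_derivative f (at x) v)) (at x)" for x
  proof -
    have "((h \<circ> f) has_derivative ((*) (deriv h (f x)) \<circ> frechet_derivative f (at x))) (at x)"
      apply (rule diff_chain_at)
      apply (rule has_derivative_fd) using comp.IH apply blast
      using smooth1_DERIV[OF comp(1), of "f x"] by (simp add: has_field_derivative_def)
    thus ?thesis by (simp add: o_def)
  qed
  have "pderiv_at i (\<lambda>x. h (f x)) = (\<lambda>x. deriv h (f x) * pderiv_at i f x)" for i
    using pderiv_at_eq[OF d] by (auto simp: pderiv_at_def)
  moreover have "(\<lambda>x. deriv h (f x) * pderiv_at i f x) \<in> gen" for i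
    using comp by (intro gen.mult[OF gen.comp[OF smooth1_deriv[OF comp(1)] comp(2)]]) auto
  ultimately show ?case using differentiableI[OF d] by auto
next
  case (aff f c b)
  have d: "((\<lambda>x. f (c *\<^sub>R x + b)) has_derivative (\<lambda>v. frechet_derivative f (at (c *\<^sub>R x + b)) (c *\<^sub>R v))) (at x)" for x
  proof -
    have "((f \<circ> (\<lambda>x. c *\<^sub>R x + b)) has_derivative (frechet_derivative f (at (c *\<^sub>R x + b)) \<circ> (\<lambda>v. c *\<^sub>R v))) (at x)"
      using aff by (intro diff_chain_at has_derivative_fd smooth_fun_diff)
         (auto intro!: derivative_eq_intros)
    thus ?thesis by (simp add: o_def)
  qed
  have lin: "linear (frechet_derivative f (at y))" for y
    using aff by (meson has_derivative_fd has_derivative_linear smooth_fun_diff)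
  have "pderiv_at i (\<lambda>x. f (c *\<^sub>R x + b)) = (\<lambda>x. c * pderiv_at i f (c *\<^sub>R x + b))" for i
    using pderiv_at_eq[OF d] by (auto simp: pderiv_at_def linear_cmul[OF lin])
  moreover have "(\<lambda>x. c * pderiv_at i f (c *\<^sub>R x + b)) \<in> gen" for i
    by (rule gen.mult[OF gen.base[OF smooth_const] gen.aff[OF smooth_fun_pderiv[OF aff]]])
  ultimately show ?case using differentiableI[OF d] by auto
qed

lemma gen_smooth: "f \<in> gen \<Longrightarrow> smooth_fun f"
  by (rule smooth_funI_closed[where P=gen, OF gen_closed])


lemma poly_div_exp_0: "((\<lambda>x. poly p x / exp x) \<longlongrightarrow> (0::real)) at_top"
proof -
  have "((\<lambda>x. \<Sum>i\<le>degree p. coeff p i * (x ^ i / exp x)) \<longlongrightarrow> (\<Sum>i\<le>degree p. coeff p i * 0)) at_top"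
    by (intro tendsto_sum tendsto_mult_left tendsto_power_div_exp_0)
  moreover have "(\<lambda>x. \<Sum>i\<le>degree p. coeff p i * (x ^ i / exp x)) = (\<lambda>x. poly p x / exp x)"
    by (auto simp: poly_altdef sum_divide_distrib)
  ultimately show ?thesis by simp
qed

definition gb :: "real poly \<Rightarrow> real \<Rightarrow> real" where
  "gb p t = (if t > 0 then poly p (1/t) * exp (-1/t) else 0)"

definition Db :: "real poly \<Rightarrow> real poly" where
  "Db p = [:0,0,1:] * (p - pderiv p)"

lemma gb_deriv: "(gb p has_real_derivative gb (Db p) t) (at t)"
proof -
  consider "t > 0" | "t < 0" | "t = 0" by linarith
  then show ?thesis
  proof cases
    case 1
    have d: "((\<lambda>t. poly p (1/t) * exp (-1/t)) has_real_derivative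
          (poly (pderiv p) (1/t) * (- 1 / t^2)) * exp (-1/t) + poly p (1/t) * (exp (-1/t) * (1/t^2))) (at t)"
      using 1 by (auto intro!: derivative_eq_intros simp: power2_eq_square field_simps)
    have e: "(poly (pderiv p) (1/t) * (- 1 / t^2)) * exp (-1/t) + poly p (1/t) * (exp (-1/t) * (1/t^2)) = gb (Db p) t"
      using 1 by (simp add: gb_def Db_def power2_eq_square field_simps)
    show ?thesis
      apply (rule has_field_derivative_transform_within_open[where S="{0<..}" and f="\<lambda>t. poly p (1/t) * exp (-1/t)"])
      using d e 1 by (auto simp: gb_def)
  next
    case 2
    have z: "gb (Db p) t = 0" using 2 by (simp add: gb_def)
    show ?thesis unfolding z
      by (rule has_field_derivative_transform_within_open[of "\<lambda>t. 0" 0 t "{..<0}"]) (use 2 in \<open>auto simp: gb_def\<close>)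
  next
    case 3
    have r: "((\<lambda>h. gb p h / h) \<longlongrightarrow> 0) (at_right 0)"
    proof -
      have "((\<lambda>x. poly ([:0,1:] * p) x / exp x) \<longlongrightarrow> 0) at_top" by (rule poly_div_exp_0)
      then have "((\<lambda>h. poly ([:0,1:] * p) (inverse h) / exp (inverse h)) \<longlongrightarrow> 0) (at_right 0)"
        by (rule filterlim_compose[OF _ filterlim_inverse_at_top_right])
      then show ?thesis
        apply (rule Lim_transform_eventually)
        apply (rule eventually_at_right_less[THEN eventually_mono])
        by (auto simp: gb_def exp_minus field_simps)
    qed
    have l: "((\<lambda>h. gb p h / h) \<longlongrightarrow> 0) (at_left 0)"
      apply (rule Lim_transform_eventually[where f="\<lambda>_. 0"])
       apply simp
      apply (rule eventually_mono[OF eventually_at_left_real[where a=0 and b="-1"]])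
      by (auto simp: gb_def)
    have "((\<lambda>h. gb p h / h) \<longlongrightarrow> 0) (at 0)"
      using r l by (simp add: filterlim_split_at)
    then have "((\<lambda>h. (gb p (0 + h) - gb p 0) / h) \<longlongrightarrow> 0) (at 0)"
      by (simp add: gb_def)
    then show ?thesis using 3 by (simp add: DERIV_def gb_def)
  qed
qed

lemma deriv_gb: "deriv (gb p) = gb (Db p)"
  using gb_deriv DERIV_imp_deriv by blast

lemma deriv_pow_gb: "(deriv ^^ m) (gb p) = gb ((Db ^^ m) p)"
  by (induction m) (auto simp: deriv_gb)

lemma smooth1_gb: "smooth1 (gb p)"
  unfolding smooth1_def deriv_pow_gb
  using gb_deriv field_differentiable_def by blast

definition f0 :: "real \<Rightarrow> real" where "f0 = gb 1"

lemma smooth1_f0: "smooth1 f0" by (simp add: f0_def smooth1_gb)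
lemma f0_pos: "t > 0 \<Longrightarrow> f0 t > 0" by (simp add: f0_def gb_def)
lemma f0_zero: "t \<le> 0 \<Longrightarrow> f0 t = 0" by (simp add: f0_def gb_def)
lemma f0_nonneg: "f0 t \<ge> 0" by (simp add: f0_def gb_def)


lemma smooth_fd_bl: "smooth_fun \<eta> \<Longrightarrow> bounded_linear (frechet_derivative \<eta> (at z))"
  by (meson has_derivative_bounded_linear has_derivative_fd smooth_fun_diff)

lemma pderiv_cont: "smooth_fun \<eta> \<Longrightarrow> continuous_on S (pderiv_at j \<eta>)"
  by (meson continuous_at_imp_continuous_on differentiable_imp_continuous_within smooth_fun_diff smooth_fun_pderiv)

lemma smooth_cont: "smooth_fun \<eta> \<Longrightarrow> continuous_on S \<eta>"
  by (meson continuous_at_imp_continuous_on differentiable_imp_continuous_within smooth_fun_diff)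

lemma fd_axis: "frechet_derivative \<eta> (at z) (axis j 1) = pderiv_at j \<eta> z"
  by (simp add: pderiv_at_def)

definition cvh :: "real^'n::finite \<Rightarrow> real^'n \<Rightarrow> (real^'n \<Rightarrow> real) \<Rightarrow> (real^'n \<Rightarrow> real) \<Rightarrow> real^'n \<Rightarrow> real" where
  "cvh a b \<eta> g x = integral (cbox a b) (\<lambda>y. \<eta> (x - y) * g y)"

lemma cv_has_derivative:
  fixes \<eta> g :: "real^'n::finite \<Rightarrow> real"
  assumes eta: "smooth_fun \<eta>" and g: "continuous_on (cbox a b) g"
  shows "(cvh a b \<eta> g has_derivative (\<lambda>v. integral (cbox a b) (\<lambda>y. frechet_derivative \<eta> (at (x - y)) v * g y))) (at x)"
proof -
  define fx where "fx = (\<lambda>x t. Blinfun (\<lambda>v. frechet_derivative \<eta> (at (x - t)) v * g t))"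
  have bl: "bounded_linear (\<lambda>v. frechet_derivative \<eta> (at z) v * c)" for z c
    by (rule bounded_linear_compose[OF bounded_linear_mult_left smooth_fd_bl[OF eta]])
  have fxa: "blinfun_apply (fx x t) = (\<lambda>v. frechet_derivative \<eta> (at (x - t)) v * g t)" for x t
    unfolding fx_def by (rule bounded_linear_Blinfun_apply[OF bl])
  have D1: "((\<lambda>x. \<eta> (x - t) * g t) has_derivative blinfun_apply (fx x t)) (at x within UNIV)" for x t
  proof -
    have "((\<eta> \<circ> (\<lambda>x. x - t)) has_derivative (frechet_derivative \<eta> (at (x - t)) \<circ> (\<lambda>v. v))) (at x)"
      by (rule diff_chain_at) (auto intro!: derivative_eq_intros has_derivative_fd smooth_fun_diff eta)
    then have "((\<lambda>x. \<eta> (x - t)) has_derivative frechet_derivative \<eta> (at (x - t))) (at x)"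
      by (simp add: o_def)
    from has_derivative_mult[OF this has_derivative_const[of "g t"]]
    show ?thesis unfolding fxa by simp
  qed
  have cont_eta: "continuous_on UNIV \<eta>" by (rule smooth_cont[OF eta])
  have int2: "(\<lambda>t. \<eta> (x - t) * g t) integrable_on cbox a b" for x
    by (intro integrable_continuous continuous_intros continuous_on_compose2[OF cont_eta] g) auto
  have cfx: "continuous_on (UNIV \<times> cbox a b) (\<lambda>(x, t). fx x t)"
  proof (rule continuous_on_blinfun_componentwise)
    fix i :: "real^'n" assume "i \<in> Basis"
    then obtain j where i: "i = axis j 1" by (auto simp: Basis_vec_def)
    have pc: "continuous_on UNIV (pderiv_at j \<eta>)" by (rule pderiv_cont[OF eta])
    have "(\<lambda>x. blinfun_apply (case x of (x, t) \<Rightarrow> fx x t) i) = (\<lambda>(x,t). pderiv_at j \<eta> (x - t) * g t)"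
      by (auto simp: fxa i fd_axis)
    moreover have "continuous_on (UNIV \<times> cbox a b) (\<lambda>(x,t). pderiv_at j \<eta> (x - t) * g t)"
      unfolding case_prod_beta
      by (intro continuous_intros continuous_on_compose2[OF pc] continuous_on_compose2[OF g]) auto
    ultimately show "continuous_on (UNIV \<times> cbox a b) (\<lambda>x. blinfun_apply (case x of (x, t) \<Rightarrow> fx x t) i)"
      by metis
  qed
  have L: "((\<lambda>x. integral (cbox a b) (\<lambda>t. \<eta> (x - t) * g t)) has_derivative integral (cbox a b) (fx x)) (at x within UNIV)"
    by (rule leibniz_rule[OF D1 int2 cfx]) auto
  have fxint: "fx x integrable_on cbox a b"
  proof -
    have "continuous_on (cbox a b) ((\<lambda>(x, t). fx x t) \<circ> Pair x)"
      apply (rule continuous_on_compose) apply (intro continuous_intros)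
      apply (rule continuous_on_subset[OF cfx]) by auto
    then have "continuous_on (cbox a b) (fx x)" by (simp add: o_def)
    thus ?thesis by (rule integrable_continuous)
  qed
  have "blinfun_apply (integral (cbox a b) (fx x)) = (\<lambda>v. integral (cbox a b) (\<lambda>y. frechet_derivative \<eta> (at (x - y)) v * g y))"
    by (rule ext, subst blinfun_apply_integral[OF fxint]) (simp add: fxa)
  with L show ?thesis unfolding cvh_def by simp
qed

lemma pderiv_cvh:
  assumes "smooth_fun \<eta>" "continuous_on (cbox a b) g"
  shows "pderiv_at i (cvh a b \<eta> g) = cvh a b (pderiv_at i \<eta>) g"
  by (rule ext, subst pderiv_at_eq[OF cv_has_derivative[OF assms]]) (simp add: cvh_def fd_axis)

lemma smooth_cvh:
  assumes "smooth_fun \<eta>" "continuous_on (cbox a b) g"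
  shows "smooth_fun (cvh a b \<eta> g)"
proof (rule smooth_funI_closed[where P="{cvh a b \<eta> g | \<eta>. smooth_fun \<eta>}"])
  fix f assume "f \<in> {cvh a b \<eta> g | \<eta>. smooth_fun \<eta>}"
  then obtain \<eta> where f: "f = cvh a b \<eta> g" and e: "smooth_fun \<eta>" by auto
  show "(\<forall>x. f differentiable at x) \<and> (\<forall>i. pderiv_at i f \<in> {cvh a b \<eta> g | \<eta>. smooth_fun \<eta>})"
    using cv_has_derivative[OF e assms(2)] pderiv_cvh[OF e assms(2)] smooth_fun_pderiv[OF e]
    unfolding f by (auto intro: differentiableI)
qed (use assms in auto)


lemma gen_const: "(\<lambda>x. c) \<in> gen" by (rule gen.base[OF smooth_const])

lemma gen_sum: "finite S \<Longrightarrow> (\<And>j. j \<in> S \<Longrightarrow> f j \<in> gen) \<Longrightarrow> (\<lambda>x. \<Sum>j\<in>S. f j x) \<in> gen"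
proof (induction S rule: finite_induct)
  case empty then show ?case using gen_const[of 0] by simp
next
  case (insert a F)
  then show ?case using gen.add[of "f a" "\<lambda>x. \<Sum>j\<in>F. f j x"] by simp
qed

lemma smooth_coord: "smooth_fun (\<lambda>x::real^'n::finite. x $ j)"
proof (rule smooth_funI_closed[where P="insert (\<lambda>x. x $ j) (range (\<lambda>c. \<lambda>x. c))"])
  fix g :: "real^'n \<Rightarrow> real" assume g: "g \<in> insert (\<lambda>x. x $ j) (range (\<lambda>c. \<lambda>x. c))"
  show "(\<forall>x. g differentiable at x) \<and> (\<forall>i. pderiv_at i g \<in> insert (\<lambda>x. x $ j) (range (\<lambda>c. \<lambda>x. c)))"
  proof (cases "g = (\<lambda>x. x $ j)")
    case True
    have d: "((\<lambda>x. x $ j) has_derivative (\<lambda>x. x $ j)) (at x)" for x :: "real^'n"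
      by (rule bounded_linear_imp_has_derivative) auto
    have "pderiv_at i g = (\<lambda>x. if i = j then 1 else 0)" for i
      unfolding True by (rule ext, subst pderiv_at_eq[OF d]) (simp add: axis_def)
    then show ?thesis using True d by (auto intro: differentiableI)
  next
    case False
    then obtain d where g: "g = (\<lambda>x. d)" using g by auto
    have "pderiv_at i g = (\<lambda>x. 0)" for i
      by (rule ext, unfold g, rule pderiv_at_eq[where f'="\<lambda>_. 0", simplified]) (rule has_derivative_const)
    then show ?thesis using g by auto
  qed
qed auto

lemma f0_mono: "t \<le> t' \<Longrightarrow> f0 t \<le> f0 t'"
  by (auto simp: f0_def gb_def divide_simps)

lemma f0_pos_iff: "f0 t > 0 \<longleftrightarrow> t > 0"
  by (auto simp: f0_def gb_def)

definition eta0 :: "real^'n::finite \<Rightarrow> real" where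
  "eta0 x = f0 (1 - x \<bullet> x)"

lemma inner_cart_sum: "(x::real^'n::finite) \<bullet> x = (\<Sum>j\<in>UNIV. x $ j * x $ j)"
  by (simp add: inner_vec_def)

lemma eta0_gen: "(eta0 :: real^'n::finite \<Rightarrow> real) \<in> gen"
proof -
  have "(\<lambda>x::real^'n. \<Sum>j\<in>UNIV. x $ j * x $ j) \<in> gen"
    by (intro gen_sum gen.mult gen.base smooth_coord) auto
  then have "(\<lambda>x::real^'n. (\<lambda>x. 1) x + (\<lambda>x. (-1) * (\<Sum>j\<in>UNIV. x $ j * x $ j)) x) \<in> gen"
    by (intro gen.add gen.mult gen_const)
  then have "(\<lambda>x::real^'n. f0 ((\<lambda>x. 1) x + (\<lambda>x. (-1) * (\<Sum>j\<in>UNIV. x $ j * x $ j)) x)) \<in> gen"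
    by (rule gen.comp[OF smooth1_f0])
  moreover have "eta0 = (\<lambda>x::real^'n. f0 ((\<lambda>x. 1) x + (\<lambda>x. (-1) * (\<Sum>j\<in>UNIV. x $ j * x $ j)) x))"
    by (auto simp: eta0_def inner_cart_sum)
  ultimately show ?thesis by simp
qed

lemma eta0_nz: "eta0 x \<noteq> 0 \<Longrightarrow> norm x < 1"
proof -
  assume "eta0 x \<noteq> 0"
  then have "1 - x \<bullet> x > 0" using f0_nonneg f0_pos_iff unfolding eta0_def
    by (metis less_eq_real_def)
  then have "norm x ^ 2 < 1 ^ 2" by (simp add: power2_norm_eq_inner)
  then show ?thesis by (rule power2_less_imp_less) simp
qed

lemma eta0_nonneg: "eta0 x \<ge> 0" by (simp add: eta0_def f0_nonneg)

lemma eta0_lb: "norm x \<le> 1/2 \<Longrightarrow> eta0 x \<ge> f0 (3/4)"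
proof -
  assume "norm x \<le> 1/2"
  then have "norm x ^ 2 \<le> (1/2)^2" by (simp add: power_mono)
  moreover have "x \<bullet> x = (norm x)^2" by (simp add: power2_norm_eq_inner)
  ultimately have "x \<bullet> x \<le> 1/4" by (simp add: power2_eq_square)
  then show ?thesis unfolding eta0_def by (intro f0_mono) simp
qed

lemma cc_props:
  fixes f :: "real^'n::finite \<Rightarrow> real"
  assumes c: "continuous_on UNIV f" and K: "compact K" and z: "\<And>x. x \<notin> K \<Longrightarrow> f x = 0"
  shows "integrable lborel f" "integrable lebesgue f" "integral\<^sup>L lebesgue f = integral\<^sup>L lborel f"
    "f \<in> borel_measurable borel" "integral UNIV f = integral\<^sup>L lborel f"
    "K \<subseteq> cbox a b \<Longrightarrow> integral (cbox a b) f = integral\<^sup>L lborel f"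
proof -
  have e: "(\<lambda>x. indicator K x *\<^sub>R f x) = f"
    by (intro ext) (use z in \<open>auto simp: indicator_def\<close>)
  show i: "integrable lborel f"
    using borel_integrable_compact[OF K continuous_on_subset[OF c]] e by auto
  show m: "f \<in> borel_measurable borel" by (rule borel_measurable_continuous_onI[OF c])
  show "integrable lebesgue f" using i m by (simp add: integrable_completion)
  show "integral\<^sup>L lebesgue f = integral\<^sup>L lborel f" using m by (simp add: integral_completion)
  show u: "integral UNIV f = integral\<^sup>L lborel f"
    using has_integral_integral_lborel[OF i] by (rule integral_unique)
  assume "K \<subseteq> cbox a b"
  then have "(\<lambda>x. if x \<in> cbox a b then f x else 0) = f" by (intro ext) (use z in auto)
  then show "integral (cbox a b) f = integral\<^sup>L lborel f"
    using integral_restrict_UNIV[of "cbox a b" f] u by simp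
qed

lemma eta0_cc: "continuous_on UNIV (eta0 :: real^'n::finite \<Rightarrow> real)" "compact (cball (0::real^'n::finite) 1)"
  "\<And>x::real^'n. x \<notin> cball 0 1 \<Longrightarrow> eta0 x = 0"
  using smooth_cont[OF gen_smooth[OF eta0_gen]] eta0_nz by force+

lemma eta0_int_pos: "integral\<^sup>L lborel (eta0 :: real^'n::finite \<Rightarrow> real) > 0"
proof -
  let ?B = "ball (0::real^'n) (1/2)"
  have "integral\<^sup>L lborel (\<lambda>x. f0 (3/4) * indicator ?B x) \<le> integral\<^sup>L lborel (eta0 :: real^'n \<Rightarrow> real)"
  proof (rule Bochner_Integration.integral_mono)
    show "integrable lborel (eta0 :: real^'n \<Rightarrow> real)" by (rule cc_props(1)[OF eta0_cc])
    show "integrable lborel (\<lambda>x::real^'n. f0 (3/4) * indicator ?B x)"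
      using emeasure_lborel_ball_finite by (intro integrable_mult_right integrable_real_indicator) auto
    fix x :: "real^'n" show "f0 (3/4) * indicator ?B x \<le> eta0 x"
      using eta0_lb[of x] eta0_nonneg[of x] by (auto simp: indicator_def)
  qed
  moreover have "integral\<^sup>L lborel (\<lambda>x. f0 (3/4) * indicator ?B x) = f0 (3/4) * measure lborel ?B"
    by simp
  moreover have "f0 (3/4) * measure lborel ?B > 0"
    using content_ball_pos[of "1/2" 0] f0_pos[of "3/4"] by simp
  ultimately show ?thesis by linarith
qed

definition eta :: "real^'n::finite \<Rightarrow> real" where
  "eta x = (1 / integral\<^sup>L lborel (eta0 :: real^'n \<Rightarrow> real)) * eta0 x"

lemma eta_gen: "(eta :: real^'n::finite \<Rightarrow> real) \<in> gen"
  unfolding eta_def[abs_def] by (intro gen.mult gen_const eta0_gen)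

lemma eta_nz: "(eta :: real^'n::finite \<Rightarrow> real) x \<noteq> 0 \<Longrightarrow> norm x < 1"
  using eta0_nz by (auto simp: eta_def)

lemma eta_nonneg: "(eta :: real^'n::finite \<Rightarrow> real) x \<ge> 0"
  unfolding eta_def using eta0_nonneg[of x] eta0_int_pos[where 'n='n] by simp

lemma eta_cc: "continuous_on UNIV (eta :: real^'n::finite \<Rightarrow> real)" "compact (cball (0::real^'n::finite) 1)"
  "\<And>x::real^'n. x \<notin> cball 0 1 \<Longrightarrow> eta x = 0"
  using smooth_cont[OF gen_smooth[OF eta_gen]] eta_nz by force+

lemma eta_int_lborel: "integral\<^sup>L lborel (eta :: real^'n::finite \<Rightarrow> real) = 1"
  using eta0_int_pos[where 'n='n] unfolding eta_def by simp

lemma eta_int_lebesgue: "integral\<^sup>L lebesgue (eta :: real^'n::finite \<Rightarrow> real) = 1"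
proof -
  have "integral\<^sup>L lebesgue (eta :: real^'n::finite \<Rightarrow> real) = integral\<^sup>L lborel (eta :: real^'n::finite \<Rightarrow> real)"
    apply (rule cc_props(3)[where K="cball 0 1"])
      apply (rule eta_cc(1))
     apply simp
    using eta_nz by fastforce
  then show ?thesis using eta_int_lborel[where 'n='n] by simp
qed


lemma lborel_integral_affine_cart:
  fixes f :: "real^'n::finite \<Rightarrow> real"
  assumes c: "c \<noteq> 0" and f: "f \<in> borel_measurable borel"
  shows "integral\<^sup>L lborel f = \<bar>c\<bar>^CARD('n) * integral\<^sup>L lborel (\<lambda>z. f (t + c *\<^sub>R z))"
proof -
  have m: "(\<lambda>z::real^'n. t + c *\<^sub>R z) \<in> measurable lborel borel" by simp
  have "integral\<^sup>L lborel f = integral\<^sup>L (density (distr lborel borel (\<lambda>z::real^'n. t + c *\<^sub>R z)) (\<lambda>_. \<bar>c\<bar>^DIM(real^'n))) f"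
    using lborel_affine[OF c, of t] by simp
  also have "\<dots> = integral\<^sup>L (distr lborel borel (\<lambda>z::real^'n. t + c *\<^sub>R z)) (\<lambda>x. \<bar>c\<bar>^DIM(real^'n) *\<^sub>R f x)"
    by (rule integral_density) (use f in auto)
  also have "\<dots> = integral\<^sup>L lborel (\<lambda>z. \<bar>c\<bar>^DIM(real^'n) *\<^sub>R f (t + c *\<^sub>R z))"
    by (rule integral_distr[OF m]) (use f in simp)
  finally show ?thesis by simp
qed

lemma mol_eq: "mollifier_scale eta \<epsilon> = (\<lambda>x::real^'n::finite. (1 / \<epsilon> ^ CARD('n)) * eta (inverse \<epsilon> *\<^sub>R x + 0))"
  by (auto simp: mollifier_scale_def)

lemma mol_gen: "mollifier_scale (eta :: real^'n::finite \<Rightarrow> real) \<epsilon> \<in> gen"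
  unfolding mol_eq by (intro gen.mult gen_const gen.aff gen_smooth eta_gen)

lemma mol_smooth: "smooth_fun (mollifier_scale (eta :: real^'n::finite \<Rightarrow> real) \<epsilon>)"
  by (rule gen_smooth[OF mol_gen])

lemma mol_cont: "continuous_on S (mollifier_scale (eta :: real^'n::finite \<Rightarrow> real) \<epsilon>)"
  by (rule smooth_cont[OF mol_smooth])

lemma mol_nz: "\<epsilon> > 0 \<Longrightarrow> mollifier_scale (eta :: real^'n::finite \<Rightarrow> real) \<epsilon> z \<noteq> 0 \<Longrightarrow> norm z < \<epsilon>"
  using eta_nz[of "z /\<^sub>R \<epsilon>"] by (auto simp: mollifier_scale_def divide_simps)

lemma mol_nonneg: "\<epsilon> > 0 \<Longrightarrow> mollifier_scale (eta :: real^'n::finite \<Rightarrow> real) \<epsilon> z \<ge> 0"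
  by (auto simp: mollifier_scale_def intro!: divide_nonneg_pos eta_nonneg)

lemma mol_int_shift:
  assumes e: "\<epsilon> > 0"
  shows "integral\<^sup>L lborel (\<lambda>y. mollifier_scale (eta :: real^'n::finite \<Rightarrow> real) \<epsilon> (x - y)) = 1"
proof -
  let ?m = "mollifier_scale (eta :: real^'n::finite \<Rightarrow> real) \<epsilon>"
  have meas: "(\<lambda>y. ?m (x - y)) \<in> borel_measurable borel"
    by (intro borel_measurable_continuous_onI continuous_on_compose2[OF mol_cont[of UNIV]] continuous_intros) auto
  have "integral\<^sup>L lborel (\<lambda>y. ?m (x - y)) = \<bar>- \<epsilon>\<bar>^CARD('n) * integral\<^sup>L lborel (\<lambda>z. ?m (x - (x + (- \<epsilon>) *\<^sub>R z)))"
    by (rule lborel_integral_affine_cart) (use e meas in auto)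
  also have "(\<lambda>z. ?m (x - (x + (- \<epsilon>) *\<^sub>R z))) = (\<lambda>z. (1 / \<epsilon> ^ CARD('n)) * eta z)"
    using e by (auto simp: mollifier_scale_def)
  also have "\<bar>- \<epsilon>\<bar>^CARD('n) * integral\<^sup>L lborel (\<lambda>z. (1 / \<epsilon> ^ CARD('n)) * (eta :: real^'n \<Rightarrow> real) z) = 1"
    using e eta_int_lborel[where 'n='n] by simp
  finally show ?thesis .
qed

lemma mol_shift_cc:
  assumes e: "\<epsilon> > 0"
  shows "continuous_on UNIV (\<lambda>y. mollifier_scale (eta :: real^'n::finite \<Rightarrow> real) \<epsilon> (x - y))"
    "\<And>y. y \<notin> cball x \<epsilon> \<Longrightarrow> mollifier_scale (eta :: real^'n::finite \<Rightarrow> real) \<epsilon> (x - y) = 0"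
proof -
  show "continuous_on UNIV (\<lambda>y. mollifier_scale (eta :: real^'n::finite \<Rightarrow> real) \<epsilon> (x - y))"
    by (intro continuous_on_compose2[OF mol_cont[of UNIV]] continuous_intros) auto
  fix y :: "real^'n" assume "y \<notin> cball x \<epsilon>"
  then show "mollifier_scale eta \<epsilon> (x - y) = 0"
    using mol_nz[OF e, of "x - y"] by (auto simp: dist_norm)
qed

definition cvl :: "real \<Rightarrow> (real^'n::finite \<Rightarrow> real) \<Rightarrow> real^'n \<Rightarrow> real" where
  "cvl \<epsilon> g x = integral\<^sup>L lborel (\<lambda>y. mollifier_scale (eta :: real^'n \<Rightarrow> real) \<epsilon> (x - y) * g y)"

lemma cvh_cvl:
  assumes e: "\<epsilon> > 0" and g: "continuous_on UNIV g" and z: "\<And>y. y \<notin> cbox a b \<Longrightarrow> g y = 0"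
  shows "cvh a b (mollifier_scale eta \<epsilon>) g x = cvl \<epsilon> g x"
  unfolding cvh_def cvl_def
  by (rule cc_props(6)[where K="cbox a b"])
     (auto intro!: continuous_intros continuous_on_compose2[OF mol_cont[of UNIV]] g simp: z)

lemma cvl_approx:
  fixes g :: "real^'n::finite \<Rightarrow> real"
  assumes e: "\<epsilon> > 0" and g: "continuous_on UNIV g" and K: "compact K" and z: "\<And>y. y \<notin> K \<Longrightarrow> g y = 0"
    and L: "\<And>x y. \<bar>g y - g x\<bar> \<le> L * norm (y - x)"
  shows "\<bar>cvl \<epsilon> g x - g x\<bar> \<le> L * \<epsilon>"
proof -
  let ?m = "\<lambda>y. mollifier_scale (eta :: real^'n::finite \<Rightarrow> real) \<epsilon> (x - y)"
  have mc1: "continuous_on UNIV ?m" by (rule mol_shift_cc(1)[OF e])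
  have mc2: "\<And>y. y \<notin> cball x \<epsilon> \<Longrightarrow> ?m y = 0" by (rule mol_shift_cc(2)[OF e])
  have Lnn: "L \<ge> 0"
  proof -
    have "0 \<le> L * norm (axis undefined (1::real) :: real^'n)"
      using L[of 0 "axis undefined 1"] by (metis abs_ge_zero diff_0 norm_minus_cancel order_trans)
    moreover have "norm (axis undefined (1::real) :: real^'n) > 0" by (simp add: axis_eq_0_iff)
    ultimately show ?thesis by (simp add: zero_le_mult_iff)
  qed
  have im: "integrable lborel ?m"
    by (rule cc_props(1)[OF mc1 compact_cball mc2])
  have ig: "integrable lborel (\<lambda>y. ?m y * g y)"
    by (rule cc_props(1)[where K=K]) (auto intro!: continuous_intros mc1 g K simp: z)
  have "cvl \<epsilon> g x - g x = integral\<^sup>L lborel (\<lambda>y. ?m y * g y) - integral\<^sup>L lborel (\<lambda>y. ?m y * g x)"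
    using mol_int_shift[OF e, of x] by (simp add: cvl_def)
  also have "\<dots> = integral\<^sup>L lborel (\<lambda>y. ?m y * (g y - g x))"
    using im ig by (simp add: right_diff_distrib)
  finally have eq: "cvl \<epsilon> g x - g x = integral\<^sup>L lborel (\<lambda>y. ?m y * (g y - g x))" .
  have "\<bar>integral\<^sup>L lborel (\<lambda>y. ?m y * (g y - g x))\<bar> \<le> integral\<^sup>L lborel (\<lambda>y. ?m y * (L * \<epsilon>))"
  proof (rule integral_abs_bound_integral)
    show "integrable lborel (\<lambda>y. ?m y * (g y - g x))" using im ig by (simp add: right_diff_distrib)
    show "integrable lborel (\<lambda>y. ?m y * (L * \<epsilon>))" using im by simp
    fix y :: "real^'n"
    show "\<bar>?m y * (g y - g x)\<bar> \<le> ?m y * (L * \<epsilon>)"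
    proof (cases "?m y = 0")
      case False
      then have "norm (x - y) < \<epsilon>" using mol_nz[OF e] by blast
      then have "\<bar>g y - g x\<bar> \<le> L * \<epsilon>"
        using L[of x y] Lnn mult_left_mono[of "norm (y - x)" \<epsilon> L] by (simp add: norm_minus_commute)
      then show ?thesis using mol_nonneg[OF e, of "x - y"] by (simp add: abs_mult mult_left_mono)
    qed simp
  qed
  also have "\<dots> = L * \<epsilon>" using mol_int_shift[OF e, of x] by simp
  finally show ?thesis using eq by simp
qed


lemma aff_pderiv:
  assumes "smooth_fun f"
  shows "pderiv_at i (\<lambda>x. f (c *\<^sub>R x + b)) = (\<lambda>x. c * pderiv_at i f (c *\<^sub>R x + b))"
proof -
  have d: "((\<lambda>x. f (c *\<^sub>R x + b)) has_derivative (\<lambda>v. frechet_derivative f (at (c *\<^sub>R x + b)) (c *\<^sub>R v))) (at x)" for x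
  proof -
    have "((f \<circ> (\<lambda>x. c *\<^sub>R x + b)) has_derivative (frechet_derivative f (at (c *\<^sub>R x + b)) \<circ> (\<lambda>v. c *\<^sub>R v))) (at x)"
      using assms by (intro diff_chain_at has_derivative_fd smooth_fun_diff)
         (auto intro!: derivative_eq_intros)
    thus ?thesis by (simp add: o_def)
  qed
  have lin: "linear (frechet_derivative f (at y))" for y
    using assms by (meson has_derivative_fd has_derivative_linear smooth_fun_diff)
  show ?thesis
    using pderiv_at_eq[OF d] by (auto simp: pderiv_at_def linear_cmul[OF lin])
qed

lemma cont_meas_lebesgue: "continuous_on UNIV f \<Longrightarrow> f \<in> borel_measurable lebesgue"
  using continuous_imp_measurable_on_sets_lebesgue[of UNIV f] by simp

lemma cc_bounded:
  fixes f :: "'a::metric_space \<Rightarrow> 'b::real_normed_vector"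
  assumes "continuous_on UNIV f" "compact K" "\<And>x. x \<notin> K \<Longrightarrow> f x = 0"
  shows "\<exists>B. \<forall>x. norm (f x) \<le> B"
proof -
  have "bounded (f ` K)" using assms by (meson compact_continuous_image compact_imp_bounded continuous_on_subset subset_UNIV)
  then obtain B where "\<forall>y\<in>f ` K. norm y \<le> B" by (auto simp: bounded_iff)
  then have "norm (f x) \<le> max B 0" for x using assms(3)[of x] by (cases "x \<in> K") force+
  then show ?thesis by blast
qed

lemma set_integral_cart_component:
  fixes F :: "'a \<Rightarrow> real^'n::finite^'k::finite"
  assumes "set_integrable M S F"
  shows "(LINT y:S|M. F y) $ k $ i = (LINT y:S|M. F y $ k $ i)"
proof -
  have bl: "bounded_linear (\<lambda>A::real^'n^'k. A $ k $ i)"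
    by (rule bounded_linear_compose[OF bounded_linear_vec_nth bounded_linear_vec_nth])
  show ?thesis
    using integral_bounded_linear[OF bl assms[unfolded set_integrable_def]]
    by (simp add: set_lebesgue_integral_def)
qed

lemma tsupp_subset_closed: "closed C \<Longrightarrow> (\<And>x. f x \<noteq> 0 \<Longrightarrow> x \<in> C) \<Longrightarrow> tsupp f \<subseteq> C"
  unfolding tsupp_def by (rule closure_minimal) auto

lemma compact_tsupp: "bounded {x. (f :: real^'n::finite \<Rightarrow> 'b::zero) x \<noteq> 0} \<Longrightarrow> compact (tsupp f)"
  unfolding tsupp_def using compact_closure by blast

lemma deriv_conv:
  fixes w :: "real^'n::finite \<Rightarrow> real^'k::finite" and Dw :: "real^'n \<Rightarrow> real^'n^'k"
  assumes Dw: "weak_deriv_on \<Omega> w Dw" and e: "\<epsilon> > 0" and ball: "cball x \<epsilon> \<subseteq> \<Omega>"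
    and box: "\<Omega> \<subseteq> cbox a b" and wc: "continuous_on UNIV w" and wz: "\<And>y. y \<notin> \<Omega> \<Longrightarrow> w y = 0"
    and om: "\<Omega> \<in> sets lebesgue"
  shows "pderiv_at i (cvh a b (mollifier_scale eta \<epsilon>) (\<lambda>y. w y $ k)) x = conv_on \<Omega> (mollifier_scale eta \<epsilon>) Dw x $ k $ i"
proof -
  let ?m = "mollifier_scale (eta :: real^'n \<Rightarrow> real) \<epsilon>"
  let ?g = "\<lambda>y. w y $ k"
  let ?phi = "\<lambda>y. ?m ((-1) *\<^sub>R y + x)"
  have gc: "continuous_on UNIV ?g" by (intro continuous_intros wc)
  have pm: "smooth_fun (pderiv_at i ?m)" by (rule smooth_fun_pderiv[OF mol_smooth])
  have pmc: "continuous_on UNIV (pderiv_at i ?m)" by (rule smooth_cont[OF pm])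
  have "pderiv_at i (cvh a b ?m ?g) x = cvh a b (pderiv_at i ?m) ?g x"
    by (subst pderiv_cvh[OF mol_smooth continuous_on_subset[OF gc]]) auto
  also have "\<dots> = integral\<^sup>L lebesgue (\<lambda>y. pderiv_at i ?m (x - y) * ?g y)"
  proof -
    have c: "continuous_on UNIV (\<lambda>y. pderiv_at i ?m (x - y) * ?g y)"
      by (intro continuous_intros continuous_on_compose2[OF pmc] gc) auto
    have z: "\<And>y. y \<notin> cbox a b \<Longrightarrow> pderiv_at i ?m (x - y) * ?g y = 0"
      using box wz by (metis subsetD mult_zero_right zero_index)
    show ?thesis unfolding cvh_def
      using cc_props(3,6)[OF c compact_cbox z] by simp
  qed
  finally have lhs: "pderiv_at i (cvh a b ?m ?g) x = integral\<^sup>L lebesgue (\<lambda>y. pderiv_at i ?m (x - y) * ?g y)" .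
  have phis: "smooth_fun ?phi" by (rule gen_smooth[OF gen.aff[OF mol_smooth]])
  have phinz: "?phi y \<noteq> 0 \<Longrightarrow> y \<in> cball x \<epsilon>" for y
    using mol_nz[OF e, of "x - y"] by (auto simp: dist_norm)
  have phit: "test_fun_on \<Omega> ?phi"
  proof -
    have "tsupp ?phi \<subseteq> cball x \<epsilon>" by (rule tsupp_subset_closed) (use phinz in auto)
    moreover have "compact (tsupp ?phi)"
      by (rule compact_tsupp, rule bounded_subset[OF bounded_cball]) (use phinz in auto)
    ultimately show ?thesis using phis ball by (auto simp: test_fun_on_def)
  qed
  have wd: "(\<integral>y\<in>\<Omega>. w y $ k * pderiv_at i ?phi y \<partial>lebesgue) = - (\<integral>y\<in>\<Omega>. Dw y $ k $ i * ?phi y \<partial>lebesgue)"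
    using Dw phit unfolding weak_deriv_on_def by blast
  have "(\<integral>y\<in>\<Omega>. w y $ k * pderiv_at i ?phi y \<partial>lebesgue) = integral\<^sup>L lebesgue (\<lambda>y. - (pderiv_at i ?m (x - y) * ?g y))"
    unfolding set_lebesgue_integral_def aff_pderiv[OF mol_smooth]
    by (rule Bochner_Integration.integral_cong) (auto simp: indicator_def wz)
  also have "\<dots> = - integral\<^sup>L lebesgue (\<lambda>y. pderiv_at i ?m (x - y) * ?g y)" by simp
  finally have PD: "pderiv_at i (cvh a b ?m ?g) x = (\<integral>y\<in>\<Omega>. Dw y $ k $ i * ?phi y \<partial>lebesgue)"
    using lhs wd by simp
  have DI: "set_integrable lebesgue (cball x \<epsilon>) Dw"
    using Dw ball unfolding weak_deriv_on_def by auto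
  obtain B where B: "\<And>z. norm (?m z) \<le> B"
    using cc_bounded[OF mol_cont[of UNIV] compact_cball, of 0 \<epsilon>] mol_nz[OF e] by (force simp: dist_norm)
  have SI: "set_integrable lebesgue \<Omega> (\<lambda>y. ?m (x - y) *\<^sub>R Dw y)"
    unfolding set_integrable_def
  proof (rule Bochner_Integration.integrable_bound)
    show "integrable lebesgue (\<lambda>y. B *\<^sub>R (indicator (cball x \<epsilon>) y *\<^sub>R Dw y))"
      using DI unfolding set_integrable_def by (rule integrable_scaleR_right)
    have "(\<lambda>y. indicator (cball x \<epsilon>) y *\<^sub>R Dw y) \<in> borel_measurable lebesgue"
      using DI unfolding set_integrable_def by (rule borel_measurable_integrable)
    moreover have "(\<lambda>y. ?m (x - y)) \<in> borel_measurable lebesgue"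
      by (intro cont_meas_lebesgue continuous_on_compose2[OF mol_cont[of UNIV]] continuous_intros) auto
    ultimately have "(\<lambda>y. ?m (x - y) *\<^sub>R (indicator (cball x \<epsilon>) y *\<^sub>R Dw y)) \<in> borel_measurable lebesgue"
      by (rule borel_measurable_scaleR[rotated])
    moreover have "(\<lambda>y. ?m (x - y) *\<^sub>R (indicator (cball x \<epsilon>) y *\<^sub>R Dw y)) = (\<lambda>y. indicator \<Omega> y *\<^sub>R (?m (x - y) *\<^sub>R Dw y))"
      using phinz ball by (auto simp: indicator_def fun_eq_iff)
    ultimately show "(\<lambda>y. indicator \<Omega> y *\<^sub>R (?m (x - y) *\<^sub>R Dw y)) \<in> borel_measurable lebesgue" by simp
    show "AE y in lebesgue. norm (indicator \<Omega> y *\<^sub>R (?m (x - y) *\<^sub>R Dw y)) \<le> norm (B *\<^sub>R (indicator (cball x \<epsilon>) y *\<^sub>R Dw y))"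
    proof (rule AE_I2)
      fix y
      have "B \<ge> 0" using B[of 0] norm_ge_zero order_trans by blast
      show "norm (indicator \<Omega> y *\<^sub>R (?m (x - y) *\<^sub>R Dw y)) \<le> norm (B *\<^sub>R (indicator (cball x \<epsilon>) y *\<^sub>R Dw y))"
      proof (cases "y \<in> cball x \<epsilon>")
        case True
        then show ?thesis using ball B[of "x - y"] \<open>B \<ge> 0\<close>
          by (auto simp: indicator_def intro!: mult_right_mono)
      next
        case False
        then have "?m (x - y) = 0" using phinz by auto
        then show ?thesis by simp
      qed
    qed
  qed
  have "conv_on \<Omega> ?m Dw x $ k $ i = (\<integral>y\<in>\<Omega>. (?m (x - y) *\<^sub>R Dw y) $ k $ i \<partial>lebesgue)"
    unfolding conv_on_def by (rule set_integral_cart_component[OF SI])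
  also have "\<dots> = (\<integral>y\<in>\<Omega>. Dw y $ k $ i * ?phi y \<partial>lebesgue)"
    by (simp add: mult.commute)
  finally show ?thesis using PD by simp
qed


lemma fd_expand:
  fixes f :: "real^'n::finite \<Rightarrow> real"
  assumes "f differentiable (at x)"
  shows "frechet_derivative f (at x) v = (\<Sum>i\<in>UNIV. v $ i * pderiv_at i f x)"
proof -
  have lin: "linear (frechet_derivative f (at x))"
    using assms has_derivative_fd has_derivative_linear by blast
  have "v = (\<Sum>i\<in>UNIV. v $ i *\<^sub>R axis i 1)"
    by (simp add: vec_eq_iff axis_def sum.delta if_distrib cong: if_cong)
  then have "frechet_derivative f (at x) v = frechet_derivative f (at x) (\<Sum>i\<in>UNIV. v $ i *\<^sub>R axis i 1)" by simp
  also have "\<dots> = (\<Sum>i\<in>UNIV. v $ i * pderiv_at i f x)"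
    by (simp add: linear_sum[OF lin] linear_scale[OF lin] pderiv_at_def)
  finally show ?thesis .
qed

lemma smooth_vec:
  fixes f :: "'j \<Rightarrow> real^'n::finite \<Rightarrow> real" and c :: "'j \<Rightarrow> 'b::real_normed_vector"
  assumes J: "finite J" and f: "\<And>j. j \<in> J \<Longrightarrow> smooth_fun (f j)"
  shows "smooth_fun (\<lambda>x. \<Sum>j\<in>J. f j x *\<^sub>R c j)"
proof (rule smooth_funI_closed[where P="{(\<lambda>x. \<Sum>j\<in>J. g j x *\<^sub>R c j) | g. \<forall>j\<in>J. smooth_fun (g j)}"])
  fix F assume "F \<in> {(\<lambda>x. \<Sum>j\<in>J. g j x *\<^sub>R c j) | g. \<forall>j\<in>J. smooth_fun (g j)}"
  then obtain g where F: "F = (\<lambda>x. \<Sum>j\<in>J. g j x *\<^sub>R c j)" and g: "\<forall>j\<in>J. smooth_fun (g j)" by auto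
  have d: "(F has_derivative (\<lambda>v. \<Sum>j\<in>J. frechet_derivative (g j) (at x) v *\<^sub>R c j)) (at x)" for x
    unfolding F using g
    by (intro has_derivative_sum has_derivative_scaleR_left has_derivative_fd smooth_fun_diff) auto
  have pd: "pderiv_at i F = (\<lambda>x. \<Sum>j\<in>J. pderiv_at i (g j) x *\<^sub>R c j)" for i
    by (rule ext, subst pderiv_at_eq[OF d]) (simp add: pderiv_at_def)
  have pg: "\<forall>j\<in>J. smooth_fun (pderiv_at i (g j))" for i using g smooth_fun_pderiv by blast
  show "(\<forall>x. F differentiable at x) \<and> (\<forall>i. pderiv_at i F \<in> {(\<lambda>x. \<Sum>j\<in>J. g j x *\<^sub>R c j) | g. \<forall>j\<in>J. smooth_fun (g j)})"
  proof (intro conjI allI)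
    fix x show "F differentiable at x" using d by (rule differentiableI)
  next
    fix i
    show "pderiv_at i F \<in> {(\<lambda>x. \<Sum>j\<in>J. g j x *\<^sub>R c j) | g. \<forall>j\<in>J. smooth_fun (g j)}"
      unfolding pd apply (rule CollectI) apply (rule exI[of _ "\<lambda>j. pderiv_at i (g j)"]) using pg[of i] by simp
  qed
qed (use f in blast)

lemma deriv_f0_neg: "t \<le> 0 \<Longrightarrow> deriv f0 t = 0"
  by (simp add: f0_def deriv_gb gb_def)

lemma deriv_f0_cont: "continuous_on S (deriv f0)"
  using smooth1_DERIV[OF smooth1_deriv[OF smooth1_f0]]
  by (meson DERIV_isCont continuous_at_imp_continuous_on)

lemma f0_cont: "continuous_on S f0"
  using smooth1_DERIV[OF smooth1_f0]
  by (meson DERIV_isCont continuous_at_imp_continuous_on)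

lemma bnd_int:
  fixes f :: "'a \<Rightarrow> real"
  assumes "f \<in> borel_measurable M" "K \<in> sets M" "emeasure M K < \<infinity>" "AE x in M. \<bar>f x\<bar> \<le> B * indicator K x"
  shows "integrable M f"
proof (rule Bochner_Integration.integrable_bound)
  show "integrable M (\<lambda>x. B * indicator K x)"
    using assms by (intro integrable_mult_right integrable_real_indicator) auto
  show "f \<in> borel_measurable M" by fact
  show "AE x in M. norm (f x) \<le> norm (B * indicator K x)"
    using assms(4) by eventually_elim auto
qed

locale ctx =
  fixes \<Omega> :: "(real^'n::finite) set" and \<mu> :: "(real^'n) measure" and V :: "'k::finite \<Rightarrow> real^'n \<Rightarrow> real^'n"
    and w :: "real^'n \<Rightarrow> real^'k" and Dw :: "real^'n \<Rightarrow> real^'n^'k" and a b :: "real^'n" and L R W :: real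
  assumes openO: "open \<Omega>" and box: "\<Omega> \<subseteq> cbox a b" and Rb: "\<And>x. x \<in> \<Omega> \<Longrightarrow> norm x \<le> R"
    and lip: "\<And>x y. norm (w y - w x) \<le> L * norm (y - x)" and L0: "L \<ge> 0"
    and Wb: "\<And>x. norm (w x) \<le> W"
    and wc: "continuous_on UNIV w"
    and wz: "\<And>x. x \<notin> \<Omega> \<Longrightarrow> w x = 0" and Dw: "weak_deriv_on \<Omega> w Dw"
    and musets: "sets \<mu> = sets borel" and mufin: "\<And>K. compact K \<Longrightarrow> emeasure \<mu> K < \<infinity>"
    and Vm: "\<And>k. V k \<in> borel_measurable \<mu>" and VAE: "AE x in \<mu>. (\<Sum>k\<in>UNIV. (norm (V k x))\<^sup>2) = 1"
    and stat: "\<And>\<psi>::real^'n \<Rightarrow> real^'n. test_fun_on \<Omega> \<psi> \<Longrightarrow>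
                 (\<Sum>k\<in>UNIV. (\<integral>x\<in>\<Omega>. V k x \<bullet> frechet_derivative \<psi> (at x) (V k x) \<partial>\<mu>)) = 0"
begin

definition u :: "real \<Rightarrow> 'k \<Rightarrow> real^'n \<Rightarrow> real" where
  "u \<epsilon> k = cvh a b (mollifier_scale eta \<epsilon>) (\<lambda>y. w y $ k)"

lemma wk_cont: "continuous_on UNIV (\<lambda>y. w y $ k)"
  by (intro continuous_intros wc)

lemma wk_zero: "y \<notin> cbox a b \<Longrightarrow> w y $ k = 0"
proof -
  assume "y \<notin> cbox a b"
  then have "y \<notin> \<Omega>" using box by blast
  then show ?thesis by (simp add: wz)
qed

lemma u_smooth: "smooth_fun (u \<epsilon> k)"
  unfolding u_def by (rule smooth_cvh[OF mol_smooth continuous_on_subset[OF wk_cont]]) auto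

lemma u_diff: "u \<epsilon> k differentiable (at x)"
  by (rule smooth_fun_diff[OF u_smooth])

lemma u_cont: "continuous_on S (u \<epsilon> k)"
  by (rule smooth_cont[OF u_smooth])

lemma P_cont: "continuous_on S (pderiv_at i (u \<epsilon> k))"
  by (rule smooth_cont[OF smooth_fun_pderiv[OF u_smooth]])

lemma u_approx: "\<epsilon> > 0 \<Longrightarrow> \<bar>u \<epsilon> k x - w x $ k\<bar> \<le> L * \<epsilon>"
  unfolding u_def
  apply (subst cvh_cvl[OF _ wk_cont wk_zero], assumption, assumption)
  apply (rule cvl_approx[OF _ wk_cont compact_cbox wk_zero], assumption, assumption)
  by (metis lip order_trans vector_minus_component component_le_norm_cart)

lemma u_pderiv: "\<epsilon> > 0 \<Longrightarrow> cball x \<epsilon> \<subseteq> \<Omega> \<Longrightarrow>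
    pderiv_at i (u \<epsilon> k) x = conv_on \<Omega> (mollifier_scale eta \<epsilon>) Dw x $ k $ i"
  unfolding u_def
  by (rule deriv_conv[OF Dw _ _ box wc wz]) (use openO in \<open>auto intro: borel_open\<close>)

lemma cont_meas: "continuous_on UNIV f \<Longrightarrow> f \<in> borel_measurable \<mu>"
  using borel_measurable_continuous_onI measurable_cong_sets[OF musets refl] by blast

lemma closed_sets: "closed K \<Longrightarrow> K \<in> sets \<mu>"
  using musets borel_closed by auto

end


lemma f0_le1: "f0 t \<le> 1"
  by (auto simp: f0_def gb_def)

context ctx begin

lemma key:
  fixes \<delta> \<epsilon> C0 :: real and K S :: "(real^'n) set"
  assumes \<delta>: "\<delta> > 0" and Kdef: "K = {y. \<delta>/2 \<le> norm (w y)}" and SK: "\<And>y. y \<in> S \<Longrightarrow> 2*\<delta> \<le> norm (w y)"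
    and Sc: "compact S"
    and d: "\<And>y. y \<in> K \<Longrightarrow> cball y \<epsilon> \<subseteq> \<Omega>" and e: "\<epsilon> > 0"
    and eN: "real CARD('k) * (L * \<epsilon>) \<le> \<delta>/4" and eL: "L * \<epsilon> \<le> 1"
    and C0: "\<And>t. -(\<delta>^2) \<le> t \<Longrightarrow> t \<le> real CARD('k) * (W+1)^2 \<Longrightarrow> \<bar>deriv f0 t\<bar> \<le> C0"
  shows "f0 (\<delta>^2) * measure \<mu> S \<le> real CARD('k) * (2 * C0 * (W+1) * R) *
           (\<integral>x\<in>K. (\<Sum>k\<in>UNIV. \<Sum>i\<in>UNIV. \<bar>pderiv_at i (u \<epsilon> k) x\<bar>) \<partial>\<mu>)"
proof -
  define N where "N = real CARD('k)"
  define P where "P k i x = pderiv_at i (u \<epsilon> k) x" for k i x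
  define U where "U x = (\<chi> k. u \<epsilon> k x)" for x
  define Q where "Q x = (\<Sum>k\<in>UNIV. u \<epsilon> k x * u \<epsilon> k x)" for x
  define s where "s x = f0 (Q x - \<delta>^2)" for x
  define \<psi> where "\<psi> x = s x *\<^sub>R x" for x
  define E where "E x = (\<Sum>k\<in>UNIV. \<Sum>i\<in>UNIV. \<bar>P k i x\<bar>)" for x
  define DQ where "DQ x v = (\<Sum>k\<in>UNIV. 2 * u \<epsilon> k x * (\<Sum>i\<in>UNIV. v $ i * P k i x))" for x v
  define Ds where "Ds x v = deriv f0 (Q x - \<delta>^2) * DQ x v" for x v
  have wnc: "continuous_on UNIV (\<lambda>y. norm (w y))" by (intro continuous_intros wc)
  have Kcl: "closed K" unfolding Kdef by (rule closed_Collect_le[OF continuous_on_const wnc])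
  have KO: "K \<subseteq> \<Omega>" unfolding Kdef using \<delta> wz by force
  have Kb: "bounded K" using KO box bounded_cbox bounded_subset by metis
  have Kc: "compact K" using Kcl Kb by (simp add: compact_eq_bounded_closed)
  have SsubK: "S \<subseteq> K" using SK \<delta> unfolding Kdef by force
  have Ksets: "K \<in> sets \<mu>" by (rule closed_sets[OF Kcl])
  have Ssets: "S \<in> sets \<mu>" by (rule closed_sets[OF compact_imp_closed[OF Sc]])
  have Kfin: "emeasure \<mu> K < \<infinity>" by (rule mufin[OF Kc])
  have Sfin: "emeasure \<mu> S < \<infinity>" by (rule mufin[OF Sc])
  have Uw: "norm (U x - w x) \<le> \<delta>/4" for x
  proof -
    have "norm (U x - w x) \<le> (\<Sum>k\<in>UNIV. \<bar>(U x - w x) $ k\<bar>)" by (rule norm_le_l1_cart)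
    also have "\<dots> \<le> (\<Sum>k\<in>(UNIV::'k set). L * \<epsilon>)" by (rule sum_mono) (simp add: U_def u_approx[OF e])
    also have "\<dots> = N * (L * \<epsilon>)" by (simp add: N_def)
    finally show ?thesis using eN N_def by simp
  qed
  have QU: "Q x = (norm (U x))^2" for x
    by (simp add: Q_def U_def power2_norm_eq_inner inner_vec_def)
  have ub: "\<bar>u \<epsilon> k x\<bar> \<le> W + 1" for k x
  proof -
    have "\<bar>u \<epsilon> k x\<bar> \<le> \<bar>w x $ k\<bar> + L * \<epsilon>" using u_approx[OF e, of k x] by linarith
    also have "\<dots> \<le> W + 1" using component_le_norm_cart[of "w x" k] Wb[of x] eL by linarith
    finally show ?thesis .
  qed
  have Q0: "0 \<le> Q x" for x unfolding Q_def by (intro sum_nonneg) simp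
  have Qb: "Q x \<le> N * (W+1)^2" for x
  proof -
    have "Q x \<le> (\<Sum>k\<in>(UNIV::'k set). (W+1)^2)" unfolding Q_def
    proof (intro sum_mono)
      fix k have "\<bar>u \<epsilon> k x\<bar> * \<bar>u \<epsilon> k x\<bar> \<le> (W+1) * (W+1)" using ub[of k x] by (intro mult_mono) auto
      then show "u \<epsilon> k x * u \<epsilon> k x \<le> (W+1)^2" by (simp add: power2_eq_square abs_mult[symmetric])
    qed
    then show ?thesis by (simp add: N_def)
  qed
  have outK: "Q x - \<delta>^2 < 0" if "x \<notin> K" for x
  proof -
    have "norm (w x) < \<delta>/2" using that Kdef by auto
    then have "norm (U x) < \<delta>" using Uw[of x] norm_triangle_ineq[of "U x - w x" "w x"] \<delta> by (simp; linarith)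
    then have "(norm (U x))^2 < \<delta>^2" by (simp add: power_strict_mono)
    then show ?thesis using QU by simp
  qed
  have inS: "Q x - \<delta>^2 \<ge> \<delta>^2" if "x \<in> S" for x
  proof -
    have "norm (w x) \<le> norm (U x) + norm (U x - w x)"
      using norm_triangle_ineq[of "U x" "w x - U x"] by (simp add: norm_minus_commute)
    then have "norm (U x) \<ge> 2*\<delta> - \<delta>/4" using SK[OF that] Uw[of x] by linarith
    then have "(norm (U x))^2 \<ge> (2*\<delta> - \<delta>/4)^2" using \<delta> by (intro power_mono) auto
    moreover have "(2*\<delta> - \<delta>/4)^2 \<ge> 2 * \<delta>^2" by (simp add: power2_eq_square field_simps)
    ultimately show ?thesis using QU by simp
  qed
  have ud: "(u \<epsilon> k has_derivative (\<lambda>v. \<Sum>i\<in>UNIV. v $ i * P k i x)) (at x)" for k x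
    by (rule has_derivative_eq_rhs[OF has_derivative_fd[OF u_diff]]) (simp add: fun_eq_iff fd_expand[OF u_diff] P_def)
  have Qd: "(Q has_derivative DQ x) (at x)" for x
  proof -
    have "((\<lambda>x. \<Sum>k\<in>UNIV. u \<epsilon> k x * u \<epsilon> k x) has_derivative
        (\<lambda>v. \<Sum>k\<in>UNIV. u \<epsilon> k x * (\<Sum>i\<in>UNIV. v $ i * P k i x) + (\<Sum>i\<in>UNIV. v $ i * P k i x) * u \<epsilon> k x)) (at x)"
      by (intro has_derivative_sum has_derivative_mult ud)
    then show ?thesis unfolding Q_def[abs_def] DQ_def[abs_def]
      by (rule has_derivative_eq_rhs) (rule ext, rule sum.cong, auto simp: algebra_simps)
  qed
  have sd: "(s has_derivative Ds x) (at x)" for x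
  proof -
    have q: "((\<lambda>x. Q x - \<delta>^2) has_derivative DQ x) (at x)"
      by (rule has_derivative_eq_rhs[OF has_derivative_diff[OF Qd has_derivative_const]]) simp
    have "((f0 \<circ> (\<lambda>x. Q x - \<delta>^2)) has_derivative ((*) (deriv f0 (Q x - \<delta>^2)) \<circ> DQ x)) (at x)"
      apply (rule diff_chain_at[OF q])
      using smooth1_DERIV[OF smooth1_f0, of "Q x - \<delta>^2"] by (simp add: has_field_derivative_def)
    then show ?thesis by (simp add: o_def s_def[abs_def] Ds_def[abs_def])
  qed
  have psid: "(\<psi> has_derivative (\<lambda>v. s x *\<^sub>R v + Ds x v *\<^sub>R x)) (at x)" for x
    unfolding \<psi>_def[abs_def] using has_derivative_scaleR[OF sd has_derivative_ident] by simp
  have fdpsi: "frechet_derivative \<psi> (at x) = (\<lambda>v. s x *\<^sub>R v + Ds x v *\<^sub>R x)" for x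
    using frechet_derivative_at[OF psid] by simp
  have s_gen: "s \<in> gen"
  proof -
    have "Q \<in> gen" unfolding Q_def[abs_def] by (intro gen_sum gen.mult gen.base u_smooth) auto
    then have "(\<lambda>x. Q x + (\<lambda>x. - (\<delta>^2)) x) \<in> gen" by (intro gen.add gen_const)
    then have "(\<lambda>x. f0 (Q x + - (\<delta>^2))) \<in> gen" by (rule gen.comp[OF smooth1_f0])
    then show ?thesis by (simp add: s_def[abs_def])
  qed
  have psi_smooth: "smooth_fun \<psi>"
  proof -
    have "\<psi> x = (\<Sum>j\<in>Basis. (s x * (x \<bullet> j)) *\<^sub>R j)" for x
    proof -
      have "(\<Sum>j\<in>Basis. (s x * (x \<bullet> j)) *\<^sub>R j) = s x *\<^sub>R (\<Sum>j\<in>Basis. (x \<bullet> j) *\<^sub>R j)"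
        by (simp add: scaleR_sum_right)
      then show ?thesis by (simp add: \<psi>_def euclidean_representation)
    qed
    then have pe: "\<psi> = (\<lambda>x. \<Sum>j\<in>Basis. (s x * (x \<bullet> j)) *\<^sub>R j)" by (rule ext)
    have "smooth_fun (\<lambda>x. s x * (x \<bullet> j))" if jB: "j \<in> (Basis :: (real^'n) set)" for j
    proof -
      obtain i where j: "j = axis i 1" using jB by (auto simp: Basis_vec_def Basis_real_def)
      have "(\<lambda>x::real^'n. s x * (x \<bullet> j)) = (\<lambda>x. s x * x $ i)" by (simp add: j inner_axis)
      moreover have "(\<lambda>x::real^'n. s x * x $ i) \<in> gen" by (intro gen.mult s_gen gen.base smooth_coord)
      ultimately show ?thesis using gen_smooth by simp
    qed
    then show ?thesis unfolding pe by (intro smooth_vec) auto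
  qed
  have snz: "x \<in> K" if "s x \<noteq> 0" for x
  proof (rule ccontr)
    assume "x \<notin> K" then have "s x = 0" using outK f0_zero by (simp add: s_def less_imp_le)
    then show False using that by simp
  qed
  have Ds0: "Ds x v = 0" if "x \<notin> K" for x v using outK[OF that] deriv_f0_neg by (simp add: Ds_def)
  have psit: "test_fun_on \<Omega> \<psi>"
  proof -
    have ts: "tsupp \<psi> \<subseteq> K" by (rule tsupp_subset_closed[OF Kcl]) (use snz in \<open>auto simp: \<psi>_def\<close>)
    have "compact (K \<inter> tsupp \<psi>)" by (rule compact_Int_closed[OF Kc]) (simp add: tsupp_def)
    then have "compact (tsupp \<psi>)" using ts by (simp add: Int_absorb1)
    then show ?thesis using psi_smooth KO ts by (auto simp: test_fun_on_def)
  qed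
  have st: "(\<Sum>k\<in>UNIV. (\<integral>x\<in>\<Omega>. V k x \<bullet> frechet_derivative \<psi> (at x) (V k x) \<partial>\<mu>)) = 0"
    by (rule stat[OF psit])
  define A where "A k x = s x * (V k x \<bullet> V k x) + Ds x (V k x) * (V k x \<bullet> x)" for k x
  define B where "B k x = Ds x (V k x) * (V k x \<bullet> x)" for k x
  have Aeq: "V k x \<bullet> frechet_derivative \<psi> (at x) (V k x) = A k x" for k x
    by (simp add: fdpsi A_def inner_add_right)
  have A0: "A k x = 0" if "x \<notin> K" for k x
  proof -
    have "s x = 0" using snz that by blast
    then show ?thesis using Ds0[OF that] by (simp add: A_def)
  qed
  have AO: "(\<integral>x\<in>\<Omega>. A k x \<partial>\<mu>) = integral\<^sup>L \<mu> (A k)" for k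
    unfolding set_lebesgue_integral_def
    by (rule Bochner_Integration.integral_cong) (use A0 KO in \<open>auto simp: indicator_def\<close>)
  have sumA: "(\<Sum>k\<in>UNIV. integral\<^sup>L \<mu> (A k)) = 0" using st by (simp add: Aeq AO)
  have spaceU: "space \<mu> = UNIV" using sets_eq_imp_space_eq[OF musets] by simp
  have idm: "(\<lambda>x. x) \<in> borel_measurable \<mu>" by (rule cont_meas) (rule continuous_on_id)
  have Pm: "(\<lambda>x. P k i x) \<in> borel_measurable \<mu>" for k i by (rule cont_meas) (simp add: P_def[abs_def] P_cont)
  have um: "u \<epsilon> k \<in> borel_measurable \<mu>" for k by (rule cont_meas[OF u_cont])
  have Vcm: "(\<lambda>x. V k x $ i) \<in> borel_measurable \<mu>" for k i
    by (rule measurable_compose[OF Vm borel_measurable_continuous_onI]) (intro continuous_intros)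
  have Qc: "continuous_on UNIV Q" using Qd by (meson continuous_at_imp_continuous_on has_derivative_continuous)
  have sc: "continuous_on UNIV s" using sd by (meson continuous_at_imp_continuous_on has_derivative_continuous)
  have sm: "s \<in> borel_measurable \<mu>" by (rule cont_meas[OF sc])
  have dfm: "(\<lambda>x. deriv f0 (Q x - \<delta>^2)) \<in> borel_measurable \<mu>"
    by (rule cont_meas) (intro continuous_on_compose2[OF deriv_f0_cont[of UNIV]] continuous_intros Qc, auto)
  have Dsm: "(\<lambda>x. Ds x (V k x)) \<in> borel_measurable \<mu>" for k
    unfolding Ds_def DQ_def
    by (intro borel_measurable_times borel_measurable_sum dfm um Pm Vcm borel_measurable_const)
  have Vinm: "(\<lambda>x. V k x \<bullet> V k x) \<in> borel_measurable \<mu>" for k by (intro borel_measurable_inner Vm)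
  have Vxm: "(\<lambda>x. V k x \<bullet> x) \<in> borel_measurable \<mu>" for k by (intro borel_measurable_inner Vm idm)
  have Am: "A k \<in> borel_measurable \<mu>" for k
    unfolding A_def[abs_def] by (intro borel_measurable_add borel_measurable_times sm Vinm Dsm Vxm)
  have Bm: "B k \<in> borel_measurable \<mu>" for k
    unfolding B_def[abs_def] by (intro borel_measurable_times Vinm Dsm Vxm)
  have Ec: "continuous_on UNIV E" unfolding E_def[abs_def] P_def by (intro continuous_intros P_cont)
  have Em: "E \<in> borel_measurable \<mu>" by (rule cont_meas[OF Ec])
  have KEm: "(\<lambda>x. indicator K x * E x) \<in> borel_measurable \<mu>"
    using Ksets Em by (intro borel_measurable_times borel_measurable_indicator) auto
  obtain BE where BE: "\<And>x. x \<in> K \<Longrightarrow> E x \<le> BE"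
  proof -
    have "bounded (E ` K)" using Kc Ec by (meson compact_continuous_image compact_imp_bounded continuous_on_subset subset_UNIV)
    then obtain BB where "\<forall>y\<in>E ` K. norm y \<le> BB" by (auto simp: bounded_iff)
    then have h: "E x \<le> BB" if xK: "x \<in> K" for x using xK by (metis abs_le_D1 image_eqI real_norm_def)
    show ?thesis using h that by blast
  qed
  have VB: "AE x in \<mu>. \<forall>k. norm (V k x) \<le> 1"
    using VAE
  proof eventually_elim
    fix x assume h: "(\<Sum>k\<in>UNIV. (norm (V k x))\<^sup>2) = 1"
    show "\<forall>k. norm (V k x) \<le> 1"
    proof
      fix k
      have "(norm (V k x))\<^sup>2 \<le> (\<Sum>k\<in>UNIV. (norm (V k x))\<^sup>2)" by (rule member_le_sum) auto
      then have "(norm (V k x))\<^sup>2 \<le> 1\<^sup>2" using h by simp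
      then show "norm (V k x) \<le> 1" by (rule power2_le_imp_le) simp
    qed
  qed
  have C0nn: "C0 \<ge> 0"
    using C0[of 0] \<delta> by (smt (verit, best) N_def zero_le_power2 mult_nonneg_nonneg of_nat_0_le_iff)
  have Dsb: "\<bar>Ds x v\<bar> \<le> C0 * (2*(W+1)) * E x" if "norm v \<le> 1" for x v
  proof -
    have Wnn: "W + 1 \<ge> 0" using ub[of undefined x] by linarith
    have "\<bar>DQ x v\<bar> \<le> (\<Sum>k\<in>UNIV. 2 * (W+1) * (\<Sum>i\<in>UNIV. \<bar>P k i x\<bar>))"
      unfolding DQ_def
    proof (rule order_trans[OF sum_abs], rule sum_mono)
      fix k
      have si: "\<bar>\<Sum>i\<in>UNIV. v $ i * P k i x\<bar> \<le> (\<Sum>i\<in>UNIV. \<bar>P k i x\<bar>)"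
      proof (rule order_trans[OF sum_abs], rule sum_mono)
        fix i have "\<bar>v $ i\<bar> \<le> 1" using component_le_norm_cart[of v i] that by simp
        then show "\<bar>v $ i * P k i x\<bar> \<le> \<bar>P k i x\<bar>" by (simp add: abs_mult mult_left_le_one_le)
      qed
      have "\<bar>u \<epsilon> k x\<bar> * \<bar>\<Sum>i\<in>UNIV. v $ i * P k i x\<bar> \<le> (W+1) * (\<Sum>i\<in>UNIV. \<bar>P k i x\<bar>)"
        by (rule mult_mono[OF ub si Wnn]) simp
      then have "2 * (\<bar>u \<epsilon> k x\<bar> * \<bar>\<Sum>i\<in>UNIV. v $ i * P k i x\<bar>) \<le> 2 * ((W+1) * (\<Sum>i\<in>UNIV. \<bar>P k i x\<bar>))"
        by linarith
      moreover have "\<bar>2 * u \<epsilon> k x * (\<Sum>i\<in>UNIV. v $ i * P k i x)\<bar> = 2 * (\<bar>u \<epsilon> k x\<bar> * \<bar>\<Sum>i\<in>UNIV. v $ i * P k i x\<bar>)"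
        by (simp add: abs_mult)
      moreover have "2 * ((W+1) * (\<Sum>i\<in>UNIV. \<bar>P k i x\<bar>)) = 2 * (W+1) * (\<Sum>i\<in>UNIV. \<bar>P k i x\<bar>)"
        by (simp only: mult.assoc)
      ultimately show "\<bar>2 * u \<epsilon> k x * (\<Sum>i\<in>UNIV. v $ i * P k i x)\<bar> \<le> 2 * (W+1) * (\<Sum>i\<in>UNIV. \<bar>P k i x\<bar>)"
        by simp
    qed
    also have "\<dots> = 2 * (W+1) * E x" by (simp add: E_def sum_distrib_left)
    finally have dq: "\<bar>DQ x v\<bar> \<le> 2 * (W+1) * E x" .
    have "-(\<delta>^2) \<le> Q x - \<delta>^2" using Q0[of x] by simp
    moreover have "Q x - \<delta>^2 \<le> real CARD('k) * (W+1)^2"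
      using Qb[of x] zero_le_power2[of \<delta>] unfolding N_def by linarith
    ultimately have "\<bar>deriv f0 (Q x - \<delta>^2)\<bar> \<le> C0" by (rule C0)
    then have "\<bar>deriv f0 (Q x - \<delta>^2)\<bar> * \<bar>DQ x v\<bar> \<le> C0 * (2 * (W+1) * E x)"
      by (rule mult_mono[OF _ dq C0nn]) simp
    then show ?thesis by (simp add: Ds_def abs_mult mult.assoc)
  qed
  have Bb: "AE x in \<mu>. \<bar>B k x\<bar> \<le> C0 * (2*(W+1)) * R * (indicator K x * E x)" for k
    using VB
  proof eventually_elim
    fix x assume h: "\<forall>k. norm (V k x) \<le> 1"
    show "\<bar>B k x\<bar> \<le> C0 * (2*(W+1)) * R * (indicator K x * E x)"
    proof (cases "x \<in> K")
      case True
      have vx: "\<bar>V k x \<bullet> x\<bar> \<le> R"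
      proof -
        have "\<bar>V k x \<bullet> x\<bar> \<le> norm (V k x) * norm x" by (rule Cauchy_Schwarz_ineq2)
        also have "\<dots> \<le> 1 * R" using h Rb[of x] True KO by (intro mult_mono) auto
        finally show ?thesis by simp
      qed
      have "\<bar>B k x\<bar> = \<bar>Ds x (V k x)\<bar> * \<bar>V k x \<bullet> x\<bar>" by (simp add: B_def abs_mult)
      also have "\<dots> \<le> (C0 * (2*(W+1)) * E x) * R"
        using Dsb[of "V k x" x] h vx by (intro mult_mono) auto
      finally show ?thesis using True by (simp add: mult_ac)
    next
      case False
      then show ?thesis by (simp add: B_def Ds0)
    qed
  qed
  define C1 where "C1 = C0 * (2*(W+1)) * R"
  have s0: "s x = 0" if "x \<notin> K" for x using snz that by blast
  have E0: "E x \<ge> 0" for x unfolding E_def by (intro sum_nonneg) auto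
  have BEb: "\<bar>E x\<bar> \<le> \<bar>BE\<bar>" if "x \<in> K" for x using BE[OF that] E0[of x] by linarith
  have KEint: "integrable \<mu> (\<lambda>x. indicator K x * E x)"
  proof (rule bnd_int[OF KEm Ksets Kfin, where B="\<bar>BE\<bar>"])
    show "AE x in \<mu>. \<bar>indicator K x * E x\<bar> \<le> \<bar>BE\<bar> * indicator K x"
      by (rule AE_I2) (use BEb in \<open>auto simp: indicator_def\<close>)
  qed
  have sint: "integrable \<mu> s"
  proof (rule bnd_int[OF sm Ksets Kfin, where B=1])
    show "AE x in \<mu>. \<bar>s x\<bar> \<le> 1 * indicator K x"
    proof (rule AE_I2)
      fix x show "\<bar>s x\<bar> \<le> 1 * indicator K x"
        using s0[of x] f0_le1[of "Q x - \<delta>^2"] f0_nonneg[of "Q x - \<delta>^2"] by (cases "x \<in> K") (auto simp: s_def indicator_def)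
    qed
  qed
  have Bint: "integrable \<mu> (B k)" for k
  proof (rule bnd_int[OF Bm Ksets Kfin, where B="\<bar>C1\<bar> * \<bar>BE\<bar>"])
    show "AE x in \<mu>. \<bar>B k x\<bar> \<le> \<bar>C1\<bar> * \<bar>BE\<bar> * indicator K x"
      using Bb[of k]
    proof eventually_elim
      fix x assume h: "\<bar>B k x\<bar> \<le> C0 * (2*(W+1)) * R * (indicator K x * E x)"
      show "\<bar>B k x\<bar> \<le> \<bar>C1\<bar> * \<bar>BE\<bar> * indicator K x"
      proof (cases "x \<in> K")
        case True
        have "C1 * E x \<le> \<bar>C1\<bar> * \<bar>BE\<bar>"
          using BEb[OF True] by (metis abs_ge_self abs_mult mult_left_mono abs_ge_zero order_trans)
        then show ?thesis using h True by (simp add: C1_def)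
      next
        case False then show ?thesis using h by simp
      qed
    qed
  qed
  have sVint: "integrable \<mu> (\<lambda>x. s x * (V k x \<bullet> V k x))" for k
  proof (rule bnd_int[where B=1, OF _ Ksets Kfin])
    show "(\<lambda>x. s x * (V k x \<bullet> V k x)) \<in> borel_measurable \<mu>" by (intro borel_measurable_times sm Vinm)
    show "AE x in \<mu>. \<bar>s x * (V k x \<bullet> V k x)\<bar> \<le> 1 * indicator K x"
      using VB
    proof eventually_elim
      fix x assume h: "\<forall>k. norm (V k x) \<le> 1"
      have vv: "\<bar>V k x \<bullet> V k x\<bar> \<le> 1"
      proof -
        have "V k x \<bullet> V k x = (norm (V k x))^2" by (simp add: power2_norm_eq_inner)
        moreover have "(norm (V k x))^2 \<le> 1" using h by (simp add: abs_square_le_1)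
        ultimately show ?thesis by simp
      qed
      have "\<bar>s x\<bar> \<le> indicator K x"
        using s0[of x] f0_le1[of "Q x - \<delta>^2"] f0_nonneg[of "Q x - \<delta>^2"] by (cases "x \<in> K") (auto simp: s_def indicator_def)
      then show "\<bar>s x * (V k x \<bullet> V k x)\<bar> \<le> 1 * indicator K x"
        using vv by (simp add: abs_mult) (metis abs_ge_zero mult_left_le mult.commute order_trans)
    qed
  qed
  have Aint: "integrable \<mu> (A k)" for k
  proof -
    have "A k = (\<lambda>x. s x * (V k x \<bullet> V k x) + B k x)" by (simp add: A_def[abs_def] B_def[abs_def])
    then show ?thesis using sVint[of k] Bint[of k] by simp
  qed
  have eq1: "integral\<^sup>L \<mu> (\<lambda>x. \<Sum>k\<in>UNIV. A k x) = 0"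
  proof -
    have "integral\<^sup>L \<mu> (\<lambda>x. \<Sum>k\<in>UNIV. A k x) = (\<Sum>k\<in>UNIV. integral\<^sup>L \<mu> (A k))"
      by (rule Bochner_Integration.integral_sum) (use Aint in auto)
    then show ?thesis using sumA by simp
  qed
  have AEs: "AE x in \<mu>. (\<Sum>k\<in>UNIV. A k x) = s x + (\<Sum>k\<in>UNIV. B k x)"
    using VAE
  proof eventually_elim
    fix x assume h: "(\<Sum>k\<in>UNIV. (norm (V k x))\<^sup>2) = 1"
    have "(\<Sum>k\<in>UNIV. A k x) = s x * (\<Sum>k\<in>UNIV. V k x \<bullet> V k x) + (\<Sum>k\<in>UNIV. B k x)"
      by (simp add: A_def B_def sum.distrib sum_distrib_left)
    also have "(\<Sum>k\<in>UNIV. V k x \<bullet> V k x) = 1" using h by (simp add: power2_norm_eq_inner)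
    finally show "(\<Sum>k\<in>UNIV. A k x) = s x + (\<Sum>k\<in>UNIV. B k x)" by simp
  qed
  have eq2: "integral\<^sup>L \<mu> (\<lambda>x. \<Sum>k\<in>UNIV. A k x) = integral\<^sup>L \<mu> s + (\<Sum>k\<in>UNIV. integral\<^sup>L \<mu> (B k))"
  proof -
    have "integral\<^sup>L \<mu> (\<lambda>x. \<Sum>k\<in>UNIV. A k x) = integral\<^sup>L \<mu> (\<lambda>x. s x + (\<Sum>k\<in>UNIV. B k x))"
      by (rule integral_cong_AE) (use Am Bm sm AEs in \<open>auto intro!: borel_measurable_sum borel_measurable_add\<close>)
    also have "\<dots> = integral\<^sup>L \<mu> s + integral\<^sup>L \<mu> (\<lambda>x. \<Sum>k\<in>UNIV. B k x)"
      by (rule Bochner_Integration.integral_add) (use sint Bint in auto)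
    also have "integral\<^sup>L \<mu> (\<lambda>x. \<Sum>k\<in>UNIV. B k x) = (\<Sum>k\<in>UNIV. integral\<^sup>L \<mu> (B k))"
      by (rule Bochner_Integration.integral_sum) (use Bint in auto)
    finally show ?thesis .
  qed
  have sB: "integral\<^sup>L \<mu> s = - (\<Sum>k\<in>UNIV. integral\<^sup>L \<mu> (B k))" using eq1 eq2 by simp
  have Bbound: "\<bar>integral\<^sup>L \<mu> (B k)\<bar> \<le> C1 * integral\<^sup>L \<mu> (\<lambda>x. indicator K x * E x)" for k
  proof -
    have "\<bar>integral\<^sup>L \<mu> (B k)\<bar> \<le> integral\<^sup>L \<mu> (\<lambda>x. \<bar>B k x\<bar>)" by (rule integral_abs_bound)
    also have "\<dots> \<le> integral\<^sup>L \<mu> (\<lambda>x. C1 * (indicator K x * E x))"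
      by (rule integral_mono_AE) (use Bint KEint Bb in \<open>auto simp: C1_def\<close>)
    also have "\<dots> = C1 * integral\<^sup>L \<mu> (\<lambda>x. indicator K x * E x)" by simp
    finally show ?thesis .
  qed
  have lower: "f0 (\<delta>^2) * measure \<mu> S \<le> integral\<^sup>L \<mu> s"
  proof -
    have "integral\<^sup>L \<mu> (\<lambda>x. f0 (\<delta>^2) * indicator S x) \<le> integral\<^sup>L \<mu> s"
    proof (rule Bochner_Integration.integral_mono)
      show "integrable \<mu> (\<lambda>x. f0 (\<delta>^2) * indicator S x)"
        using Ssets Sfin by (intro integrable_mult_right integrable_real_indicator) auto
      show "integrable \<mu> s" by (rule sint)
      fix x show "f0 (\<delta>^2) * indicator S x \<le> s x"
      proof (cases "x \<in> S")
        case True then show ?thesis using inS[OF True] f0_mono by (simp add: s_def)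
      next
        case False then show ?thesis by (simp add: s_def f0_nonneg)
      qed
    qed
    moreover have "integral\<^sup>L \<mu> (\<lambda>x. f0 (\<delta>^2) * indicator S x) = f0 (\<delta>^2) * measure \<mu> S"
      by (simp add: spaceU)
    ultimately show ?thesis by (simp add: spaceU)
  qed
  have "\<bar>\<Sum>k\<in>UNIV. integral\<^sup>L \<mu> (B k)\<bar> \<le> (\<Sum>k\<in>UNIV. \<bar>integral\<^sup>L \<mu> (B k)\<bar>)" by (rule sum_abs)
  also have "\<dots> \<le> (\<Sum>k\<in>(UNIV::'k set). C1 * integral\<^sup>L \<mu> (\<lambda>x. indicator K x * E x))"
    by (rule sum_mono) (rule Bbound)
  also have "\<dots> = N * C1 * integral\<^sup>L \<mu> (\<lambda>x. indicator K x * E x)" by (simp add: N_def)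
  also have "integral\<^sup>L \<mu> (\<lambda>x. indicator K x * E x) = (\<integral>x\<in>K. E x \<partial>\<mu>)"
    by (simp add: set_lebesgue_integral_def)
  finally have "f0 (\<delta>^2) * measure \<mu> S \<le> N * C1 * (\<integral>x\<in>K. E x \<partial>\<mu>)"
    using lower sB by linarith
  then show ?thesis by (simp add: N_def C1_def E_def[abs_def] P_def[abs_def] mult_ac)
qed

end


lemma mat_norm2: "(norm (M :: real^'n::finite^'k::finite))^2 = (\<Sum>k\<in>UNIV. \<Sum>i\<in>UNIV. (M $ k $ i)^2)"
  by (simp only: power2_norm_eq_inner) (simp add: inner_vec_def power2_eq_square)

lemma abs_le_amgm: "t > 0 \<Longrightarrow> \<bar>p::real\<bar> \<le> t + p^2 / (4*t)"
proof -
  assume t: "t > 0"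
  have "0 \<le> (\<bar>p\<bar> - 2*t)^2" by simp
  then have "4*t*\<bar>p\<bar> \<le> p^2 + 4*t^2" by (simp add: power2_eq_square algebra_simps)
  then show ?thesis using t by (simp add: field_simps power2_eq_square)
qed

context ctx begin

lemma contK_int:
  fixes f :: "real^'n \<Rightarrow> real"
  assumes "continuous_on UNIV f" "compact K"
  shows "integrable \<mu> (\<lambda>x. indicator K x * f x)"
proof -
  have "bounded (f ` K)" using assms by (meson compact_continuous_image compact_imp_bounded continuous_on_subset subset_UNIV)
  then obtain B where B: "\<forall>y\<in>f ` K. norm y \<le> B" by (auto simp: bounded_iff)
  show ?thesis
  proof (rule bnd_int[where B=B])
    show "(\<lambda>x. indicator K x * f x) \<in> borel_measurable \<mu>"
      using closed_sets[OF compact_imp_closed[OF assms(2)]] cont_meas[OF assms(1)]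
      by (intro borel_measurable_times borel_measurable_indicator) auto
    show "K \<in> sets \<mu>" by (rule closed_sets[OF compact_imp_closed[OF assms(2)]])
    show "emeasure \<mu> K < \<infinity>" by (rule mufin[OF assms(2)])
    show "AE x in \<mu>. \<bar>indicator K x * f x\<bar> \<le> B * indicator K x"
      by (rule AE_I2) (use B in \<open>auto simp: indicator_def\<close>)
  qed
qed

lemma nullS:
  assumes Sc: "compact S" and Sw: "\<And>y. y \<in> S \<Longrightarrow> w y \<noteq> 0" and rep0: "is_local_L2_rep \<mu> \<Omega> Dw (\<lambda>x. 0)"
  shows "emeasure \<mu> S = 0"
proof (cases "S = {}")
  case True then show ?thesis by simp
next
  case False
  have wnc: "continuous_on UNIV (\<lambda>y. norm (w y))" by (intro continuous_intros wc)
  obtain x0 where x0: "x0 \<in> S" "\<And>y. y \<in> S \<Longrightarrow> norm (w x0) \<le> norm (w y)"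
    using continuous_attains_inf[OF Sc False continuous_on_subset[OF wnc]] by auto
  define \<delta> where "\<delta> = norm (w x0) / 2"
  have \<delta>: "\<delta> > 0" using Sw[OF x0(1)] by (simp add: \<delta>_def)
  have SK: "2*\<delta> \<le> norm (w y)" if "y \<in> S" for y using x0(2)[OF that] by (simp add: \<delta>_def)
  define K where "K = {y. \<delta>/2 \<le> norm (w y)}"
  have Kcl: "closed K" unfolding K_def by (rule closed_Collect_le[OF continuous_on_const wnc])
  have KO: "K \<subseteq> \<Omega>" unfolding K_def using \<delta> wz by force
  have Kb: "bounded K" using KO box bounded_cbox bounded_subset by metis
  have Kc: "compact K" using Kcl Kb by (simp add: compact_eq_bounded_closed)
  have x0K: "x0 \<in> K" using SK[OF x0(1)] \<delta> by (simp add: K_def)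
  have Sfin: "emeasure \<mu> S < \<infinity>" by (rule mufin[OF Sc])
  have R0: "R \<ge> 0" using Rb[of x0] x0K KO by (meson norm_ge_zero order_trans subsetD)
  have W0: "W \<ge> 0" using Wb[of x0] norm_ge_zero order_trans by blast
  obtain d where d: "d > 0" "(\<Union>x\<in>K. cball x d) \<subseteq> \<Omega>"
    using compact_subset_open_imp_cball_epsilon_subset[OF Kc openO KO] by blast
  define N where "N = real CARD('k)"
  define nn where "nn = real CARD('n)"
  have N0: "N \<ge> 0" by (simp add: N_def)
  obtain C0 where C0: "\<And>t. -(\<delta>^2) \<le> t \<Longrightarrow> t \<le> N * (W+1)^2 \<Longrightarrow> \<bar>deriv f0 t\<bar> \<le> C0"
  proof -
    have "bounded (deriv f0 ` {-(\<delta>^2)..N * (W+1)^2})"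
      by (intro compact_imp_bounded compact_continuous_image deriv_f0_cont compact_Icc)
    then obtain B where B: "\<forall>y\<in>deriv f0 ` {-(\<delta>^2)..N * (W+1)^2}. norm y \<le> B" by (auto simp: bounded_iff)
    have hB: "\<bar>deriv f0 t\<bar> \<le> B" if h1: "-(\<delta>^2) \<le> t" and h2: "t \<le> N * (W+1)^2" for t
      using B h1 h2 by auto
    show ?thesis using hB by (rule that)
  qed
  have C00: "C0 \<ge> 0" using C0[of 0] N0 by (smt (verit) zero_le_power2 mult_nonneg_nonneg)
  define C1 where "C1 = N * (2 * C0 * (W+1) * R)"
  have C1nn: "C1 \<ge> 0" unfolding C1_def using N0 C00 W0 R0 by simp
  define E where "E \<epsilon> x = (\<Sum>k\<in>UNIV. \<Sum>i\<in>UNIV. \<bar>pderiv_at i (u \<epsilon> k) x\<bar>)" for \<epsilon> x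
  define F where "F \<epsilon> x = (\<Sum>k\<in>UNIV. \<Sum>i\<in>UNIV. (pderiv_at i (u \<epsilon> k) x)^2)" for \<epsilon> x
  define \<epsilon>1 where "\<epsilon>1 = min d (min (\<delta> / (4 * (N * L + 1))) (1 / (L + 1)))"
  have NL0: "N * L + 1 > 0" using N0 L0 by (smt (verit) mult_nonneg_nonneg)
  have e1: "\<epsilon>1 > 0" unfolding \<epsilon>1_def using d \<delta> NL0 L0 by auto
  define X where "X = f0 (\<delta>^2) * measure \<mu> S"
  have keyE: "X \<le> C1 * (\<integral>x\<in>K. E \<epsilon> x \<partial>\<mu>)" if e: "0 < \<epsilon>" "\<epsilon> < \<epsilon>1" for \<epsilon>
  proof -
    have dd: "cball y \<epsilon> \<subseteq> \<Omega>" if "y \<in> K" for y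
    proof -
      have "cball y \<epsilon> \<subseteq> cball y d" using e \<epsilon>1_def by auto
      then show ?thesis using d(2) that by blast
    qed
    have "\<epsilon> * (4 * (N * L + 1)) < \<delta>" using e(2) NL0 unfolding \<epsilon>1_def by (simp add: field_simps)
    then have eN: "N * (L * \<epsilon>) \<le> \<delta>/4" using e(1) by (simp add: algebra_simps)
    have "\<epsilon> * (L + 1) < 1" using e(2) L0 unfolding \<epsilon>1_def by (simp add: field_simps)
    then have eL: "L * \<epsilon> \<le> 1" using e(1) by (simp add: algebra_simps)
    show ?thesis
      using key[OF \<delta> K_def SK Sc dd e(1) eN[unfolded N_def] eL C0[unfolded N_def]]
      by (simp add: X_def C1_def N_def E_def[abs_def])
  qed
  have Ec: "continuous_on UNIV (E \<epsilon>)" for \<epsilon> unfolding E_def[abs_def] by (intro continuous_intros P_cont)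
  have Fc: "continuous_on UNIV (F \<epsilon>)" for \<epsilon> unfolding F_def[abs_def] by (intro continuous_intros P_cont)
  have EF: "(\<integral>x\<in>K. E \<epsilon> x \<partial>\<mu>) \<le> nn * N * t * measure \<mu> K + (\<integral>x\<in>K. F \<epsilon> x \<partial>\<mu>) / (4*t)" if t: "t > 0" for \<epsilon> t
  proof -
    have pw: "E \<epsilon> x \<le> nn * N * t + F \<epsilon> x / (4*t)" for x
    proof -
      have "E \<epsilon> x \<le> (\<Sum>k\<in>UNIV. \<Sum>i\<in>UNIV. t + (pderiv_at i (u \<epsilon> k) x)^2 / (4*t))"
        unfolding E_def by (intro sum_mono abs_le_amgm t)
      also have "\<dots> = nn * N * t + F \<epsilon> x / (4*t)"
        by (simp add: F_def sum.distrib sum_divide_distrib nn_def N_def)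
      finally show ?thesis .
    qed
    have "integral\<^sup>L \<mu> (\<lambda>x. indicator K x * E \<epsilon> x) \<le> integral\<^sup>L \<mu> (\<lambda>x. (nn * N * t) * indicator K x + (1/(4*t)) * (indicator K x * F \<epsilon> x))"
    proof (rule Bochner_Integration.integral_mono)
      show "integrable \<mu> (\<lambda>x. indicator K x * E \<epsilon> x)" by (rule contK_int[OF Ec Kc])
      show "integrable \<mu> (\<lambda>x. (nn * N * t) * indicator K x + (1/(4*t)) * (indicator K x * F \<epsilon> x))"
        using closed_sets[OF Kcl] mufin[OF Kc] contK_int[OF Fc Kc]
        by (intro Bochner_Integration.integrable_add integrable_mult_right integrable_real_indicator) auto
      fix x show "indicator K x * E \<epsilon> x \<le> (nn * N * t) * indicator K x + (1/(4*t)) * (indicator K x * F \<epsilon> x)"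
        using pw[of x] by (auto simp: indicator_def)
    qed
    also have "\<dots> = (nn * N * t) * measure \<mu> K + (1/(4*t)) * integral\<^sup>L \<mu> (\<lambda>x. indicator K x * F \<epsilon> x)"
      using closed_sets[OF Kcl] mufin[OF Kc] contK_int[OF Fc Kc] sets_eq_imp_space_eq[OF musets]
      by (subst Bochner_Integration.integral_add) (auto intro!: integrable_mult_right integrable_real_indicator)
    finally show ?thesis by (simp add: set_lebesgue_integral_def)
  qed
  have lim: "((\<lambda>\<epsilon>. \<integral>x\<in>K. F \<epsilon> x \<partial>\<mu>) \<longlongrightarrow> 0) (at_right 0)"
  proof -
    have etat: "test_fun_on UNIV (eta :: real^'n \<Rightarrow> real)"
    proof -
      have "tsupp (eta :: real^'n \<Rightarrow> real) \<subseteq> cball 0 1"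
        by (rule tsupp_subset_closed) (auto simp: mem_cball_0 dest!: eta_nz)
      moreover have "compact (tsupp (eta :: real^'n \<Rightarrow> real))"
        by (rule compact_tsupp, rule bounded_subset[OF bounded_cball[of 0 1]]) (auto simp: mem_cball_0 dest!: eta_nz)
      ultimately show ?thesis using gen_smooth[OF eta_gen] by (simp add: test_fun_on_def)
    qed
    have r: "((\<lambda>\<epsilon>. \<integral>x\<in>K. (norm (0 - conv_on \<Omega> (mollifier_scale eta \<epsilon>) Dw x))\<^sup>2 \<partial>\<mu>) \<longlongrightarrow> 0) (at_right 0)"
      using rep0 Kc KO etat eta_int_lebesgue unfolding is_local_L2_rep_def by blast
    show ?thesis
    proof (rule Lim_transform_eventually[OF r])
      show "\<forall>\<^sub>F \<epsilon> in at_right 0. (\<integral>x\<in>K. (norm (0 - conv_on \<Omega> (mollifier_scale eta \<epsilon>) Dw x))\<^sup>2 \<partial>\<mu>) = (\<integral>x\<in>K. F \<epsilon> x \<partial>\<mu>)"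
        using eventually_at_right_real[OF d(1)]
      proof eventually_elim
        fix \<epsilon> assume "\<epsilon> \<in> {0<..<d}"
        then have e: "0 < \<epsilon>" "\<epsilon> < d" by auto
        have "(norm (0 - conv_on \<Omega> (mollifier_scale eta \<epsilon>) Dw x))\<^sup>2 = F \<epsilon> x" if "x \<in> K" for x
        proof -
          have "cball x \<epsilon> \<subseteq> \<Omega>" using d(2) that e by force
          then show ?thesis using u_pderiv[OF e(1)] by (simp add: mat_norm2 F_def)
        qed
        then show "(\<integral>x\<in>K. (norm (0 - conv_on \<Omega> (mollifier_scale eta \<epsilon>) Dw x))\<^sup>2 \<partial>\<mu>) = (\<integral>x\<in>K. F \<epsilon> x \<partial>\<mu>)"
          unfolding set_lebesgue_integral_def
          by (intro Bochner_Integration.integral_cong) (auto simp: indicator_def)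
      qed
    qed
  qed
  have Xt: "X \<le> C1 * (nn * N * t * measure \<mu> K)" if t: "t > 0" for t
  proof (rule tendsto_lowerbound)
    have h: "((\<lambda>\<epsilon>. C1 * (nn * N * t * measure \<mu> K + (\<integral>x\<in>K. F \<epsilon> x \<partial>\<mu>) / (4*t))) \<longlongrightarrow> C1 * (nn * N * t * measure \<mu> K + 0 / (4*t))) (at_right 0)"
      by (rule tendsto_mult_left[OF tendsto_add[OF tendsto_const tendsto_divide[OF lim tendsto_const]]]) (use t in simp)
    then show "((\<lambda>\<epsilon>. C1 * (nn * N * t * measure \<mu> K + (\<integral>x\<in>K. F \<epsilon> x \<partial>\<mu>) / (4*t))) \<longlongrightarrow> C1 * (nn * N * t * measure \<mu> K)) (at_right 0)"
      by simp
    show "\<forall>\<^sub>F \<epsilon> in at_right 0. X \<le> C1 * (nn * N * t * measure \<mu> K + (\<integral>x\<in>K. F \<epsilon> x \<partial>\<mu>) / (4*t))"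
      using eventually_at_right_real[OF e1]
    proof eventually_elim
      fix \<epsilon> assume "\<epsilon> \<in> {0<..<\<epsilon>1}"
      then have "X \<le> C1 * (\<integral>x\<in>K. E \<epsilon> x \<partial>\<mu>)" using keyE by auto
      also have "\<dots> \<le> C1 * (nn * N * t * measure \<mu> K + (\<integral>x\<in>K. F \<epsilon> x \<partial>\<mu>) / (4*t))"
        by (rule mult_left_mono[OF EF[OF t] C1nn])
      finally show "X \<le> C1 * (nn * N * t * measure \<mu> K + (\<integral>x\<in>K. F \<epsilon> x \<partial>\<mu>) / (4*t))" .
    qed
  qed (simp_all)
  have X0: "X \<le> 0"
  proof (rule ccontr)
    assume "\<not> X \<le> 0"
    then have Xp: "X > 0" by simp
    define c where "c = C1 * (nn * N * measure \<mu> K)"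
    have c0: "c \<ge> 0" unfolding c_def using C1nn N0 by (simp add: nn_def)
    define t where "t = X / (2 * (c + 1))"
    have t: "t > 0" using Xp c0 by (simp add: t_def)
    have "X \<le> c * t" using Xt[OF t] by (simp add: c_def mult_ac)
    moreover have "c * t < X" using Xp c0 by (simp add: t_def field_simps add_nonneg_pos)
    ultimately show False by simp
  qed
  have "f0 (\<delta>^2) > 0" using \<delta> by (simp add: f0_pos)
  then have "measure \<mu> S \<le> 0" using X0 by (simp add: X_def mult_le_0_iff)
  then have "measure \<mu> S = 0" using measure_nonneg[of \<mu> S] by simp
  then show ?thesis using emeasure_eq_ennreal_measure[of \<mu> S] Sfin by simp
qed

end


theorem mainTheorem7:
  fixes \<Omega> :: "(real^'n::finite) set"
    and T :: "'k::finite \<Rightarrow> (real^'n \<Rightarrow> real^'n) \<Rightarrow> real"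
    and \<mu> :: "(real^'n) measure"
    and V :: "'k \<Rightarrow> real^'n \<Rightarrow> real^'n"
    and w :: "real^'n \<Rightarrow> real^'k"
    and Dw :: "real^'n \<Rightarrow> real^'n^'k"
  assumes dom: "bounded_smooth_domain \<Omega>"
    and mass: "loc_finite_joint_mass T"
    and repr: "joint_mass_repr T \<mu> V"
    and stat: "\<forall>\<psi>::real^'n \<Rightarrow> real^'n. test_fun_on \<Omega> \<psi> \<longrightarrow>
                 (\<Sum>k\<in>UNIV. (\<integral>x\<in>\<Omega>. V k x \<bullet> frechet_derivative \<psi> (at x) (V k x) \<partial>\<mu>)) = 0"
    and w_lip: "\<exists>C. C-lipschitz_on UNIV w"
    and w_zero: "\<forall>x. x \<notin> \<Omega> \<longrightarrow> w x = 0"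
    and Dw: "weak_deriv_on \<Omega> w Dw"
    and rep0: "is_local_L2_rep \<mu> \<Omega> Dw (\<lambda>x. 0)"
  shows "\<forall>x\<in>current_supp T. w x = 0"
proof -
  have openO: "open \<Omega>" and bO: "bounded \<Omega>" using dom by (auto simp: bounded_smooth_domain_def)
  obtain C where lipC: "C-lipschitz_on UNIV w" using w_lip by blast
  have C0: "C \<ge> 0" by (rule lipschitz_on_nonneg[OF lipC])
  have lip: "norm (w y - w x) \<le> C * norm (y - x)" for x y
    using lipschitz_onD[OF lipC, of y x] by (simp add: dist_norm)
  have wc: "continuous_on UNIV w" by (rule lipschitz_on_continuous_on[OF lipC])
  obtain a where box: "\<Omega> \<subseteq> cbox (-a) a" using bounded_subset_cbox_symmetric[OF bO] by blast
  obtain R where Rb: "\<And>x. x \<in> \<Omega> \<Longrightarrow> norm x \<le> R" using bO by (auto simp: bounded_iff)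
  have wz: "\<And>x. x \<notin> cbox (-a) a \<Longrightarrow> w x = 0" using w_zero box by blast
  obtain W where Wb: "\<And>x. norm (w x) \<le> W"
    using cc_bounded[OF wc compact_cbox wz] by blast
  have musets: "sets \<mu> = sets borel" and mufin: "\<And>K. compact K \<Longrightarrow> emeasure \<mu> K < \<infinity>"
    and Vm: "\<And>k. V k \<in> borel_measurable \<mu>" and VAE: "AE x in \<mu>. (\<Sum>k\<in>UNIV. (norm (V k x))\<^sup>2) = 1"
    and Trep: "\<And>k \<omega>. test_fun_on UNIV \<omega> \<Longrightarrow> T k \<omega> = (\<integral>x. \<omega> x \<bullet> V k x \<partial>\<mu>)"
    using repr unfolding joint_mass_repr_def by auto
  interpret ctx \<Omega> \<mu> V w Dw "-a" a C R W
  proof unfold_locales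
    show "\<And>x. x \<notin> \<Omega> \<Longrightarrow> w x = 0" using w_zero by blast
    show "\<And>\<psi>::real^'n \<Rightarrow> real^'n. test_fun_on \<Omega> \<psi> \<Longrightarrow>
                 (\<Sum>k\<in>UNIV. (\<integral>x\<in>\<Omega>. V k x \<bullet> frechet_derivative \<psi> (at x) (V k x) \<partial>\<mu>)) = 0"
      using stat by blast
  qed (fact openO box Rb lip C0 Wb wc Dw musets mufin Vm VAE)+
  show ?thesis
  proof
    fix x assume xs: "x \<in> current_supp T"
    show "w x = 0"
    proof (rule ccontr)
      assume wx: "w x \<noteq> 0"
      define U where "U = {y. w y \<noteq> 0}"
      have Uo: "open U" unfolding U_def by (rule open_Collect_neq[OF wc continuous_on_const])
      have "\<forall>k \<omega>. test_fun_on U \<omega> \<longrightarrow> T k \<omega> = 0"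
      proof (intro allI impI)
        fix k and \<omega> :: "real^'n \<Rightarrow> real^'n" assume tf: "test_fun_on U \<omega>"
        have Sc: "compact (tsupp \<omega>)" and SU: "tsupp \<omega> \<subseteq> U" and sm: "smooth_fun \<omega>"
          using tf by (auto simp: test_fun_on_def)
        have S0: "emeasure \<mu> (tsupp \<omega>) = 0"
          by (rule nullS[OF Sc _ rep0]) (use SU in \<open>auto simp: U_def\<close>)
        have Sn: "tsupp \<omega> \<in> null_sets \<mu>"
          using S0 closed_sets[OF compact_imp_closed[OF Sc]] by (simp add: null_sets_def)
        have "T k \<omega> = (\<integral>y. \<omega> y \<bullet> V k y \<partial>\<mu>)" using Trep sm Sc by (simp add: test_fun_on_def)
        also have "\<dots> = 0"
        proof (rule integral_eq_zero_AE)
          show "AE y in \<mu>. \<omega> y \<bullet> V k y = 0"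
            using AE_not_in[OF Sn]
          proof eventually_elim
            fix y assume "y \<notin> tsupp \<omega>"
            then have "\<omega> y = 0" using closure_subset[of "{x. \<omega> x \<noteq> 0}"] unfolding tsupp_def by blast
            then show "\<omega> y \<bullet> V k y = 0" by simp
          qed
        qed
        finally show "T k \<omega> = 0" .
      qed
      then have Uf: "open U \<and> (\<forall>k \<omega>. test_fun_on U \<omega> \<longrightarrow> T k \<omega> = 0)" using Uo by (rule conjI[rotated])
      have xU: "x \<in> U" using wx by (simp add: U_def)
      have "x \<in> \<Union>{U. open U \<and> (\<forall>k \<omega>. test_fun_on U \<omega> \<longrightarrow> T k \<omega> = 0)}"
        by (rule UnionI[of U]) (use Uf xU in simp_all)
      then have "x \<notin> current_supp T" unfolding current_supp_def by (simp only: Compl_iff not_not)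
      then show False using xs by simp
    qed
  qed
qed


end
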